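(* Every EDT-Nash equilibrium is an EDT equilibrium. In extensive-form games without absentmindedness, a strategy profile is an EDT-Nash equilibrium if and only if it is a CDT-Nash equilibrium. In extensive-form games with perfect recall, a strategy profile is an EDT-Nash equilibrium if and only if it is a Nash equilibrium.
   Context: An extensive-form game consists of a finite rooted tree (nodes $\mathcal H$, leaves $\mathcal Z$, actions $A_h$), players $\mathcal N$ plus chance (with fixed action distributions), utilities $u_i:\mathcal Z\to\mathbb R_{\ge0}$, and partitions $\mathcal I_i$ of each player's nodes into infosets with common action sets $A_I$. For a node $h$ with root-to-$h$ path $(h_0,\dots,h_{d-1})$ (excluding $h$), $\mathrm{obs}(h)=(i_k,I_k,a_k)_k$ lists the player at, infoset of, and action taken at each $h_k$; $\mathrm{obs}_i(h)$ is the subsequence with $i_k=i$. Player $i$ has perfect recall if $\mathrm{obs}_i(h)=\mathrm{obs}_i(h')$ for $h,h'$ in a common infoset of $i$; the game has perfect recall if all players do. The game has absentmindedness if some infoset appears more than once among the $I_k$ in $\mathrm{obs}(h)$ for some $h$. A behavioral strategy $\pi_i$ assigns $\pi_i(\cdot\mid I)\in\Delta(A_I)$; $\mathbb P(h\mid\pi)$ is the reach probability of $h$; $U_i(\pi)=\sum_z\mathbb P(z\mid\pi)u_i(z)$; realization equivalence means equal reach probabilities at all nodes. $\pi_i^{I\mapsto\sigma}$ plays $\sigma$ at $I$, otherwise $\pi_i$. Nash: each $\pi_i\in\arg\max U_i(\cdot,\pi_{-i})$. EDT equilibrium: for all $i$, $I\in\mathcal I_i$, $\pi_i(\cdot\mid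 I)\in\arg\max_{\sigma}U_i(\pi_i^{I\mapsto\sigma},\pi_{-i})$. CDT equilibrium: each $\pi_i$ is a KKT point of maximizing $U_i(\cdot,\pi_{-i})$ over $\prod_I\Delta(A_I)$. In a single-player game (Player 1): let $I^{\mathrm{1st}}$ be the nodes $h\in I$ such that $I$ does not appear in $\mathrm{obs}(h)$, $\mathbb P(I\mid\pi)=\sum_{h\in I^{\mathrm{1st}}}\mathbb P(h\mid\pi)$, and $\mathrm{Fr}(I\mid\pi)=\sum_{h\in I}\mathbb P(h\mid\pi)$. The CDT utility of $\sigma\in\Delta(A_I)$ is $U_1^{\mathrm{CDT}}(\sigma\mid\pi,I)=U_1(\pi)+\sum_{a\in A_I}(\sigma(a)-\pi(a\mid I))\,\partial U_1(\pi)/\partial\pi(a\mid I)$, where $U_1$ is viewed as a polynomial in the variables $\pi(a\mid I)$. A strategy $\pi$ is EDT-rational (resp. CDT-rational) if there is a sequence $(\pi^{(k)},\varepsilon^{(k)})_{k\in\mathbb N}$ with each $\pi^{(k)}$ fully mixed ($\pi^{(k)}(a\mid I)>0$ for all $I,a$), $\pi^{(k)}\to\pi$, $\varepsilon^{(k)}>0$, $\varepsilon^{(k)}\to0$, and for each $k$, all $I$ with $\mathbb P(I\mid\pi^{(k)})>0$ (resp. $\mathrm{Fr}(I\mid\pi^{(k)})>0$) and all $\sigma\in\Delta(A_I)$: $\frac{1}{\mathbb P(I\mid\pi^{(k)})}(U_1(\pi^{(k),I\mapsto\sigma})-U_1(\pi^{(k)}))\le\varepsilon^{(k)}$ (resp.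 $\frac{1}{\mathrm{Fr}(I\mid\pi^{(k)})}(U_1^{\mathrm{CDT}}(\sigma\mid\pi^{(k)},I)-U_1(\pi^{(k)}))\le\varepsilon^{(k)}$). A profile $\pi$ is an EDT-Nash (resp. CDT-Nash) equilibrium if it is an EDT (resp. CDT) equilibrium and for each player $i$, in the single-player game from $i$'s perspective where the others play the fixed $\pi_{-i}$, $\pi_i$ is realization-equivalent to an EDT-rational (resp. CDT-rational) strategy. *)

theory Defs
  imports "HOL-Analysis.Analysis"
begin

text \<open>Nodes are the action sequences from the root
  (a finite prefix-closed set of lists). who h = None marks chance nodes,
  who h = Some i marks nodes of player i. info h is the label of the
  infoset containing a player node h.\<close>

record ('a, 'p, 'i) game =
  nodes  :: "'a list set"
  who    :: "'a list \<Rightarrow> 'p option"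
  chance :: "'a list \<Rightarrow> 'a \<Rightarrow> real"
  info   :: "'a list \<Rightarrow> 'i"
  util   :: "'p \<Rightarrow> 'a list \<Rightarrow> real"

type_synonym ('i, 'a) profile = "'i \<Rightarrow> 'a \<Rightarrow> real"

definition acts :: "('a, 'p, 'i) game \<Rightarrow> 'a list \<Rightarrow> 'a set" where
  "acts G h = {a. h @ [a] \<in> nodes G}"

definition leaves :: "('a, 'p, 'i) game \<Rightarrow> 'a list set" where
  "leaves G = {h \<in> nodes G. acts G h = {}}"

definition pnodes :: "('a, 'p, 'i) game \<Rightarrow> 'p \<Rightarrow> 'a list set" where
  "pnodes G i = {h \<in> nodes G. acts G h \<noteq> {} \<and> who G h = Some i}"

definition infosets :: "('a, 'p, 'i) game \<Rightarrow> 'p \<Rightarrow> 'i set" where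
  "infosets G i = info G ` pnodes G i"

definition all_infosets :: "('a, 'p, 'i) game \<Rightarrow> 'i set" where
  "all_infosets G = (\<Union>i. infosets G i)"

definition inI :: "('a, 'p, 'i) game \<Rightarrow> 'i \<Rightarrow> 'a list set" where
  "inI G I = {h \<in> nodes G. acts G h \<noteq> {} \<and> who G h \<noteq> None \<and> info G h = I}"

definition iacts :: "('a, 'p, 'i) game \<Rightarrow> 'i \<Rightarrow> 'a set" where
  "iacts G I = acts G (SOME h. h \<in> inI G I)"

definition efg :: "('a, 'p, 'i) game \<Rightarrow> bool" where
  "efg G \<longleftrightarrow>
     finite (nodes G) \<and> [] \<in> nodes G \<and>
     (\<forall>h a. h @ [a] \<in> nodes G \<longrightarrow> h \<in> nodes G) \<and>
     (\<forall>h \<in> nodes G. acts G h \<noteq> {} \<and> who G h = None \<longrightarrow>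
        (\<forall>a \<in> acts G h. 0 \<le> chance G h a) \<and> sum (chance G h) (acts G h) = 1) \<and>
     (\<forall>h \<in> nodes G. \<forall>h' \<in> nodes G.
        acts G h \<noteq> {} \<and> who G h \<noteq> None \<and> acts G h' \<noteq> {} \<and> who G h' \<noteq> None \<and>
        info G h = info G h' \<longrightarrow> who G h = who G h' \<and> acts G h = acts G h') \<and>
     (\<forall>i. \<forall>z \<in> leaves G. 0 \<le> util G i z)"

definition obs :: "('a, 'p, 'i) game \<Rightarrow> 'a list \<Rightarrow> ('p option \<times> 'i \<times> 'a) list" where
  "obs G h = map (\<lambda>k. (who G (take k h), info G (take k h), h ! k)) [0..<length h]"

definition obs_i :: "('a, 'p, 'i) game \<Rightarrow> 'p \<Rightarrow> 'a list \<Rightarrow> ('p option \<times> 'i \<times> 'a) list" where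
  "obs_i G i h = filter (\<lambda>(j, _, _). j = Some i) (obs G h)"

definition perfect_recall :: "('a, 'p, 'i) game \<Rightarrow> bool" where
  "perfect_recall G \<longleftrightarrow>
     (\<forall>i. \<forall>h \<in> pnodes G i. \<forall>h' \<in> pnodes G i. info G h = info G h' \<longrightarrow> obs_i G i h = obs_i G i h')"

definition path_infosets :: "('a, 'p, 'i) game \<Rightarrow> 'a list \<Rightarrow> 'i list" where
  "path_infosets G h = map (\<lambda>(_, I, _). I) (filter (\<lambda>(j, _, _). j \<noteq> None) (obs G h))"

definition absentminded :: "('a, 'p, 'i) game \<Rightarrow> bool" where
  "absentminded G \<longleftrightarrow> (\<exists>h \<in> nodes G. \<not> distinct (path_infosets G h))"

definition actprob :: "('a, 'p, 'i) game \<Rightarrow> ('i, 'a) profile \<Rightarrow> 'a list \<Rightarrow> 'a \<Rightarrow> real" where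
  "actprob G \<pi> h a = (case who G h of None \<Rightarrow> chance G h a | Some _ \<Rightarrow> \<pi> (info G h) a)"

definition reach :: "('a, 'p, 'i) game \<Rightarrow> ('i, 'a) profile \<Rightarrow> 'a list \<Rightarrow> real" where
  "reach G \<pi> h = (\<Prod>k<length h. actprob G \<pi> (take k h) (h ! k))"

text \<open>Expected utility; as a formula it is a polynomial in the values \<pi> I a.\<close>
definition U :: "('a, 'p, 'i) game \<Rightarrow> 'p \<Rightarrow> ('i, 'a) profile \<Rightarrow> real" where
  "U G i \<pi> = (\<Sum>z \<in> leaves G. reach G \<pi> z * util G i z)"

definition behav :: "('a, 'p, 'i) game \<Rightarrow> 'i \<Rightarrow> ('a \<Rightarrow> real) \<Rightarrow> bool" where
  "behav G I \<sigma> \<longleftrightarrow> (\<forall>a \<in> iacts G I. 0 \<le> \<sigma> a) \<and> sum \<sigma> (iacts G I) = 1 \<and>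
                     (\<forall>a. a \<notin> iacts G I \<longrightarrow> \<sigma> a = 0)"

definition profile :: "('a, 'p, 'i) game \<Rightarrow> ('i, 'a) profile \<Rightarrow> bool" where
  "profile G \<pi> \<longleftrightarrow> (\<forall>I \<in> all_infosets G. behav G I (\<pi> I))"

definition devs :: "('a, 'p, 'i) game \<Rightarrow> 'p \<Rightarrow> ('i, 'a) profile \<Rightarrow> ('i, 'a) profile \<Rightarrow> bool" where
  "devs G i \<pi> \<pi>' \<longleftrightarrow> profile G \<pi>' \<and> (\<forall>I. I \<notin> infosets G i \<longrightarrow> \<pi>' I = \<pi> I)"

definition Nash :: "('a, 'p, 'i) game \<Rightarrow> ('i, 'a) profile \<Rightarrow> bool" where
  "Nash G \<pi> \<longleftrightarrow> profile G \<pi> \<and> (\<forall>i \<pi>'. devs G i \<pi> \<pi>' \<longrightarrow> U G i \<pi>' \<le> U G i \<pi>)"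

definition EDT_eq :: "('a, 'p, 'i) game \<Rightarrow> ('i, 'a) profile \<Rightarrow> bool" where
  "EDT_eq G \<pi> \<longleftrightarrow> profile G \<pi> \<and>
     (\<forall>i. \<forall>I \<in> infosets G i. \<forall>\<sigma>. behav G I \<sigma> \<longrightarrow> U G i (\<pi>(I := \<sigma>)) \<le> U G i \<pi>)"

definition dU :: "('a, 'p, 'i) game \<Rightarrow> 'p \<Rightarrow> ('i, 'a) profile \<Rightarrow> 'i \<Rightarrow> 'a \<Rightarrow> real" where
  "dU G i \<pi> I a = deriv (\<lambda>t. U G i (\<pi>(I := (\<pi> I)(a := t)))) (\<pi> I a)"

text \<open>KKT conditions for maximizing U_i(., pi_{-i}) over the product of simplices.\<close>
definition CDT_eq :: "('a, 'p, 'i) game \<Rightarrow> ('i, 'a) profile \<Rightarrow> bool" where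
  "CDT_eq G \<pi> \<longleftrightarrow> profile G \<pi> \<and>
     (\<forall>i. \<exists>(lam::'i \<Rightarrow> real) (\<mu>::'i \<Rightarrow> 'a \<Rightarrow> real). \<forall>I \<in> infosets G i. \<forall>a \<in> iacts G I.
        dU G i \<pi> I a + \<mu> I a = lam I \<and> 0 \<le> \<mu> I a \<and> \<mu> I a * \<pi> I a = 0)"

definition first_visit :: "('a, 'p, 'i) game \<Rightarrow> 'i \<Rightarrow> 'a list set" where
  "first_visit G I = {h \<in> inI G I. I \<notin> set (path_infosets G h)}"

definition PI :: "('a, 'p, 'i) game \<Rightarrow> ('i, 'a) profile \<Rightarrow> 'i \<Rightarrow> real" where
  "PI G \<pi> I = (\<Sum>h \<in> first_visit G I. reach G \<pi> h)"

definition Fr :: "('a, 'p, 'i) game \<Rightarrow> ('i, 'a) profile \<Rightarrow> 'i \<Rightarrow> real" where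
  "Fr G \<pi> I = (\<Sum>h \<in> inI G I. reach G \<pi> h)"

definition UCDT :: "('a, 'p, 'i) game \<Rightarrow> 'p \<Rightarrow> ('i, 'a) profile \<Rightarrow> 'i \<Rightarrow> ('a \<Rightarrow> real) \<Rightarrow> real" where
  "UCDT G i \<pi> I \<sigma> = U G i \<pi> + (\<Sum>a \<in> iacts G I. (\<sigma> a - \<pi> I a) * dU G i \<pi> I a)"

definition EDT_rational :: "('a, 'p, 'i) game \<Rightarrow> 'p \<Rightarrow> ('i, 'a) profile \<Rightarrow> bool" where
  "EDT_rational G i \<rho> \<longleftrightarrow>
     (\<exists>(\<pi>s :: nat \<Rightarrow> ('i, 'a) profile) (\<epsilon> :: nat \<Rightarrow> real).
        (\<forall>k. devs G i \<rho> (\<pi>s k)) \<and>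
        (\<forall>k. \<forall>I \<in> infosets G i. \<forall>a \<in> iacts G I. 0 < \<pi>s k I a) \<and>
        (\<forall>I a. (\<lambda>k. \<pi>s k I a) \<longlonglongrightarrow> \<rho> I a) \<and>
        (\<forall>k. 0 < \<epsilon> k) \<and> \<epsilon> \<longlonglongrightarrow> 0 \<and>
        (\<forall>k. \<forall>I \<in> infosets G i. PI G (\<pi>s k) I > 0 \<longrightarrow>
           (\<forall>\<sigma>. behav G I \<sigma> \<longrightarrow>
              (U G i ((\<pi>s k)(I := \<sigma>)) - U G i (\<pi>s k)) / PI G (\<pi>s k) I \<le> \<epsilon> k)))"

definition CDT_rational :: "('a, 'p, 'i) game \<Rightarrow> 'p \<Rightarrow> ('i, 'a) profile \<Rightarrow> bool" where
  "CDT_rational G i \<rho> \<longleftrightarrow>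
     (\<exists>(\<pi>s :: nat \<Rightarrow> ('i, 'a) profile) (\<epsilon> :: nat \<Rightarrow> real).
        (\<forall>k. devs G i \<rho> (\<pi>s k)) \<and>
        (\<forall>k. \<forall>I \<in> infosets G i. \<forall>a \<in> iacts G I. 0 < \<pi>s k I a) \<and>
        (\<forall>I a. (\<lambda>k. \<pi>s k I a) \<longlonglongrightarrow> \<rho> I a) \<and>
        (\<forall>k. 0 < \<epsilon> k) \<and> \<epsilon> \<longlonglongrightarrow> 0 \<and>
        (\<forall>k. \<forall>I \<in> infosets G i. Fr G (\<pi>s k) I > 0 \<longrightarrow>
           (\<forall>\<sigma>. behav G I \<sigma> \<longrightarrow>
              (UCDT G i (\<pi>s k) I \<sigma> - U G i (\<pi>s k)) / Fr G (\<pi>s k) I \<le> \<epsilon> k)))"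

definition EDT_Nash :: "('a, 'p, 'i) game \<Rightarrow> ('i, 'a) profile \<Rightarrow> bool" where
  "EDT_Nash G \<pi> \<longleftrightarrow> EDT_eq G \<pi> \<and>
     (\<forall>i. \<exists>\<rho>. devs G i \<pi> \<rho> \<and> (\<forall>h \<in> nodes G. reach G \<rho> h = reach G \<pi> h) \<and> EDT_rational G i \<rho>)"

definition CDT_Nash :: "('a, 'p, 'i) game \<Rightarrow> ('i, 'a) profile \<Rightarrow> bool" where
  "CDT_Nash G \<pi> \<longleftrightarrow> CDT_eq G \<pi> \<and>
     (\<forall>i. \<exists>\<rho>. devs G i \<pi> \<rho> \<and> (\<forall>h \<in> nodes G. reach G \<rho> h = reach G \<pi> h) \<and> CDT_rational G i \<rho>)"

end

theory Submission
  imports Defs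
begin

lemma efg_fin: "efg G \<Longrightarrow> finite (nodes G)" by (simp add: efg_def)

lemma node_prefix: assumes "efg G" shows "h @ t \<in> nodes G \<Longrightarrow> h \<in> nodes G"
proof (induction t rule: rev_induct)
  case Nil then show ?case by simp
next
  case (snoc x xs)
  then show ?case using assms unfolding efg_def by (metis append_assoc)
qed

lemma take_node: "efg G \<Longrightarrow> h \<in> nodes G \<Longrightarrow> take k h \<in> nodes G"
  by (metis append_take_drop_id node_prefix)

lemma take_child: assumes "efg G" "h \<in> nodes G" "k < length h"
  shows "h ! k \<in> acts G (take k h)" "acts G (take k h) \<noteq> {}"
proof -
  have "take (Suc k) h = take k h @ [h ! k]" using assms(3) by (simp add: take_Suc_conv_app_nth)
  then have "take k h @ [h ! k] \<in> nodes G" using take_node[OF assms(1,2)] by metis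
  then show "h ! k \<in> acts G (take k h)" by (simp add: acts_def)
  then show "acts G (take k h) \<noteq> {}" by auto
qed

lemma reach_snoc: "reach G \<tau> (h @ [a]) = reach G \<tau> h * actprob G \<tau> h a"
  unfolding reach_def by (simp add: nth_append)

lemma efg_same: assumes "efg G" "h \<in> nodes G" "h' \<in> nodes G" "acts G h \<noteq> {}" "who G h \<noteq> None"
  "acts G h' \<noteq> {}" "who G h' \<noteq> None" "info G h = info G h'"
  shows "who G h = who G h' \<and> acts G h = acts G h'"
proof -
  have "\<forall>h \<in> nodes G. \<forall>h' \<in> nodes G.
        acts G h \<noteq> {} \<and> who G h \<noteq> None \<and> acts G h' \<noteq> {} \<and> who G h' \<noteq> None \<and>
        info G h = info G h' \<longrightarrow> who G h = who G h' \<and> acts G h = acts G h'"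
    using assms(1) unfolding efg_def by blast
  then show ?thesis using assms(2-8) by blast
qed

lemma inI_who: assumes "efg G" "I \<in> infosets G i" "h \<in> inI G I" shows "who G h = Some i"
proof -
  obtain h' where h': "h' \<in> pnodes G i" "info G h' = I" using assms(2) by (auto simp: infosets_def)
  have "who G h = who G h'"
    using efg_same[OF assms(1), of h h'] h' assms(3) unfolding inI_def pnodes_def by auto
  then show ?thesis using h' by (simp add: pnodes_def)
qed

lemma inI_node: "h \<in> inI G I \<Longrightarrow> h \<in> nodes G \<and> acts G h \<noteq> {} \<and> who G h \<noteq> None \<and> info G h = I"
  by (simp add: inI_def)

lemma iacts_eq: assumes "efg G" "h \<in> inI G I" shows "iacts G I = acts G h"
proof -
  have "(SOME h. h \<in> inI G I) \<in> inI G I" using assms(2) by (rule someI)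
  then show ?thesis using assms efg_same[OF assms(1), of h "SOME h. h \<in> inI G I"] unfolding iacts_def inI_def by auto
qed

lemma pnodes_inI: "h \<in> pnodes G i \<Longrightarrow> h \<in> inI G (info G h) \<and> info G h \<in> infosets G i"
  by (auto simp: pnodes_def inI_def infosets_def)

lemma inI_pnodes: "efg G \<Longrightarrow> I \<in> infosets G i \<Longrightarrow> h \<in> inI G I \<Longrightarrow> h \<in> pnodes G i"
  using inI_who[of G I i h] by (auto simp: inI_def pnodes_def)

lemma infosets_all: "I \<in> infosets G i \<Longrightarrow> I \<in> all_infosets G"
  by (auto simp: all_infosets_def)

lemma finite_inI: "efg G \<Longrightarrow> finite (inI G I)"
  by (auto simp: efg_def inI_def)

lemma finite_leaves: "efg G \<Longrightarrow> finite (leaves G)"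
  by (auto simp: efg_def leaves_def)

lemma finite_acts: assumes "efg G" shows "finite (acts G h)"
proof -
  have "acts G h \<subseteq> last ` nodes G"
  proof
    fix a assume "a \<in> acts G h"
    then have "h @ [a] \<in> nodes G" by (simp add: acts_def)
    then show "a \<in> last ` nodes G" by (rule rev_image_eqI) simp
  qed
  then show ?thesis using assms finite_surj unfolding efg_def by blast
qed

lemma finite_iacts: "efg G \<Longrightarrow> finite (iacts G I)"
  by (simp add: iacts_def finite_acts)

lemma finite_infosets: "efg G \<Longrightarrow> finite (infosets G i)"
  unfolding infosets_def pnodes_def efg_def by simp

lemma iacts_ne: assumes "efg G" "I \<in> infosets G i" shows "iacts G I \<noteq> {}"
proof -
  obtain h where "h \<in> pnodes G i" "info G h = I" using assms(2) by (auto simp: infosets_def)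
  then show ?thesis using iacts_eq[OF assms(1)] pnodes_inI[of h G i] by (auto simp: inI_def)
qed

lemma not_inf_other: assumes "efg G" "g \<in> nodes G" "acts G g \<noteq> {}" "who G g = Some j" "j \<noteq> i"
  shows "info G g \<notin> infosets G i"
proof
  assume a: "info G g \<in> infosets G i"
  have "g \<in> inI G (info G g)" using assms by (simp add: inI_def)
  then have "who G g = Some i" using inI_who[OF assms(1) a] by blast
  then show False using assms by simp
qed

lemma behav_le1: assumes "efg G" "behav G I \<sigma>" "a \<in> iacts G I" shows "0 \<le> \<sigma> a" "\<sigma> a \<le> 1"
proof -
  show "0 \<le> \<sigma> a" using assms by (auto simp: behav_def)
  have "\<sigma> a \<le> sum \<sigma> (iacts G I)"
    by (rule member_le_sum) (use assms finite_iacts in \<open>auto simp: behav_def\<close>)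
  then show "\<sigma> a \<le> 1" using assms by (auto simp: behav_def)
qed

lemma ap_bounds: assumes "efg G" "profile G \<tau>" "g \<in> nodes G" "a \<in> acts G g"
  shows "0 \<le> actprob G \<tau> g a" "actprob G \<tau> g a \<le> 1"
proof -
  have ne: "acts G g \<noteq> {}" using assms(4) by auto
  have "0 \<le> actprob G \<tau> g a \<and> actprob G \<tau> g a \<le> 1"
  proof (cases "who G g")
    case None
    then have c: "(\<forall>a \<in> acts G g. 0 \<le> chance G g a) \<and> sum (chance G g) (acts G g) = 1"
      using assms(1,3) ne unfolding efg_def by blast
    have "chance G g a \<le> sum (chance G g) (acts G g)"
      by (rule member_le_sum) (use c assms finite_acts in auto)
    then show ?thesis using None c assms(4) by (simp add: actprob_def)
  next
    case (Some j)
    then have "g \<in> pnodes G j" using assms ne by (simp add: pnodes_def)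
    then have gi: "g \<in> inI G (info G g)" "info G g \<in> all_infosets G"
      using pnodes_inI[of g G j] infosets_all[of "info G g" G j] by blast+
    then have "behav G (info G g) (\<tau> (info G g))" using assms(2) by (simp add: profile_def)
    moreover have "a \<in> iacts G (info G g)" using iacts_eq[OF assms(1) gi(1)] assms(4) by simp
    ultimately show ?thesis using behav_le1[OF assms(1)] Some by (simp add: actprob_def)
  qed
  then show "0 \<le> actprob G \<tau> g a" "actprob G \<tau> g a \<le> 1" by auto
qed

lemma ap_take_bounds: assumes "efg G" "profile G \<tau>" "h \<in> nodes G" "k < length h"
  shows "0 \<le> actprob G \<tau> (take k h) (h ! k)" "actprob G \<tau> (take k h) (h ! k) \<le> 1"
  using ap_bounds[OF assms(1,2) take_node[OF assms(1,3)] take_child(1)[OF assms(1,3,4)]] by auto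

lemma prod_take_bounds: assumes "efg G" "profile G \<tau>" "h \<in> nodes G" "K \<subseteq> {..<length h}"
  shows "0 \<le> (\<Prod>k\<in>K. actprob G \<tau> (take k h) (h ! k))" "(\<Prod>k\<in>K. actprob G \<tau> (take k h) (h ! k)) \<le> 1"
  using ap_take_bounds[OF assms(1-3)] assms(4)
  by (auto intro!: prod_nonneg prod_le_1)

lemma reach_bounds: assumes "efg G" "profile G \<tau>" "h \<in> nodes G"
  shows "0 \<le> reach G \<tau> h" "reach G \<tau> h \<le> 1"
  using prod_take_bounds[OF assms, of "{..<length h}"] by (auto simp: reach_def)

lemma path_inf_eq: "path_infosets G h =
   map (\<lambda>k. info G (take k h)) (filter (\<lambda>k. who G (take k h) \<noteq> None) [0..<length h])"
  unfolding path_infosets_def obs_def by (simp add: filter_map o_def)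

definition noabs :: "('a, 'p, 'i) game \<Rightarrow> bool" where
  "noabs G \<longleftrightarrow> (\<forall>z\<in>nodes G. \<forall>k1 k2 I. k1 < length z \<longrightarrow> k2 < length z \<longrightarrow>
      take k1 z \<in> inI G I \<longrightarrow> take k2 z \<in> inI G I \<longrightarrow> k1 = k2)"

lemma noabsD: "noabs G \<Longrightarrow> z \<in> nodes G \<Longrightarrow> k1 < length z \<Longrightarrow> k2 < length z \<Longrightarrow>
      take k1 z \<in> inI G I \<Longrightarrow> take k2 z \<in> inI G I \<Longrightarrow> k1 = k2"
  unfolding noabs_def by blast

lemma noabs_if: assumes "\<not> absentminded G" shows "noabs G"
  unfolding noabs_def
proof (intro ballI allI impI)
  fix z k1 k2 I
  assume z: "z \<in> nodes G" and k: "k1 < length z" "k2 < length z"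
    and t: "take k1 z \<in> inI G I" "take k2 z \<in> inI G I"
  have "distinct (path_infosets G z)" using assms z by (auto simp: absentminded_def)
  then have "inj_on (\<lambda>k. info G (take k z)) (set (filter (\<lambda>k. who G (take k z) \<noteq> None) [0..<length z]))"
    by (simp add: path_inf_eq distinct_map)
  moreover have "k1 \<in> set (filter (\<lambda>k. who G (take k z) \<noteq> None) [0..<length z])"
    "k2 \<in> set (filter (\<lambda>k. who G (take k z) \<noteq> None) [0..<length z])"
    using k t by (auto simp: inI_def)
  moreover have "info G (take k1 z) = info G (take k2 z)" using t by (simp add: inI_def)
  ultimately show "k1 = k2" by (meson inj_onD)
qed

lemma first_visit_eq: assumes "efg G" "noabs G" shows "first_visit G I = inI G I"
proof -
  have "I \<notin> set (path_infosets G h)" if h: "h \<in> inI G I" for h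
  proof
    assume "I \<in> set (path_infosets G h)"
    then obtain k where k: "k < length h" "who G (take k h) \<noteq> None" "info G (take k h) = I"
      by (auto simp: path_inf_eq)
    have hn: "h \<in> nodes G" "acts G h \<noteq> {}" using h by (auto simp: inI_def)
    then obtain a where a: "h @ [a] \<in> nodes G" by (auto simp: acts_def)
    have "take k h \<in> inI G I" using k take_node[OF assms(1) hn(1)] take_child(2)[OF assms(1) hn(1) k(1)]
      by (simp add: inI_def)
    then have "take k (h @ [a]) \<in> inI G I" using k by simp
    moreover have "take (length h) (h @ [a]) \<in> inI G I" using h by simp
    ultimately have "k = length h" using noabsD[OF assms(2) a, of k "length h"] k by simp
    then show False using k by simp
  qed
  then show ?thesis by (auto simp: first_visit_def)
qed

lemma PI_Fr: "efg G \<Longrightarrow> noabs G \<Longrightarrow> PI G \<tau> I = Fr G \<tau> I"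
  by (simp add: PI_def Fr_def first_visit_eq)

definition thr :: "('a, 'p, 'i) game \<Rightarrow> 'i \<Rightarrow> 'a list \<Rightarrow> bool" where
  "thr G I z \<longleftrightarrow> (\<exists>k < length z. take k z \<in> inI G I)"

definition kI :: "('a, 'p, 'i) game \<Rightarrow> 'i \<Rightarrow> 'a list \<Rightarrow> nat" where
  "kI G I z = (THE k. k < length z \<and> take k z \<in> inI G I)"

lemma kI: assumes "noabs G" "z \<in> nodes G" "thr G I z"
  shows "kI G I z < length z" "take (kI G I z) z \<in> inI G I"
    "\<And>k. k < length z \<Longrightarrow> take k z \<in> inI G I \<Longrightarrow> k = kI G I z"
proof -
  obtain k where k: "k < length z" "take k z \<in> inI G I" using assms(3) by (auto simp: thr_def)
  have u: "\<And>k'. k' < length z \<and> take k' z \<in> inI G I \<Longrightarrow> k' = k"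
    using noabsD[OF assms(1,2)] k by blast
  have eq: "kI G I z = k" unfolding kI_def
  proof (rule the_equality)
    show "k < length z \<and> take k z \<in> inI G I" using k by blast
  qed (rule u)
  show "kI G I z < length z" "take (kI G I z) z \<in> inI G I" unfolding eq using k by blast+
  show "\<And>k. k < length z \<Longrightarrow> take k z \<in> inI G I \<Longrightarrow> k = kI G I z" unfolding eq using u by blast
qed

lemma ap_upd: "actprob G (\<tau>(I := \<sigma>)) g a =
   (if who G g \<noteq> None \<and> info G g = I then \<sigma> a else actprob G \<tau> g a)"
  by (cases "who G g") (auto simp: actprob_def)

lemma ap_upd_take: assumes "efg G" "z \<in> nodes G" "k < length z" "take k z \<notin> inI G I"
  shows "actprob G (\<tau>(I := \<sigma>)) (take k z) (z ! k) = actprob G \<tau> (take k z) (z ! k)"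
proof -
  have "take k z \<in> nodes G" "acts G (take k z) \<noteq> {}"
    using take_node[OF assms(1,2)] take_child(2)[OF assms(1,2,3)] by auto
  then have "\<not> (who G (take k z) \<noteq> None \<and> info G (take k z) = I)" using assms(4) unfolding inI_def by blast
  then show ?thesis by (simp only: ap_upd if_False)
qed

definition Qf :: "('a, 'p, 'i) game \<Rightarrow> ('i, 'a) profile \<Rightarrow> 'i \<Rightarrow> 'a list \<Rightarrow> real" where
  "Qf G \<tau> I z = (\<Prod>k \<in> {..<length z} - {kI G I z}. actprob G \<tau> (take k z) (z ! k))"

lemma reach_upd_T: assumes "efg G" "noabs G" "z \<in> nodes G" "thr G I z"
  shows "reach G (\<tau>(I := \<sigma>)) z = \<sigma> (z ! kI G I z) * Qf G \<tau> I z"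
proof -
  note K = kI[OF assms(2,3,4)]
  have "reach G (\<tau>(I := \<sigma>)) z = actprob G (\<tau>(I := \<sigma>)) (take (kI G I z) z) (z ! kI G I z) *
      (\<Prod>k \<in> {..<length z} - {kI G I z}. actprob G (\<tau>(I := \<sigma>)) (take k z) (z ! k))"
    unfolding reach_def by (rule prod.remove) (use K(1) in simp_all)
  also have "(\<Prod>k \<in> {..<length z} - {kI G I z}. actprob G (\<tau>(I := \<sigma>)) (take k z) (z ! k)) = Qf G \<tau> I z"
    unfolding Qf_def
  proof (rule prod.cong[OF refl])
    fix k assume "k \<in> {..<length z} - {kI G I z}"
    then have "k < length z" "k \<noteq> kI G I z" by auto
    then have "take k z \<notin> inI G I" using K(3) by blast
    then show "actprob G (\<tau>(I := \<sigma>)) (take k z) (z ! k) = actprob G \<tau> (take k z) (z ! k)"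
      using ap_upd_take[OF assms(1,3) \<open>k < length z\<close>] by blast
  qed
  also have "actprob G (\<tau>(I := \<sigma>)) (take (kI G I z) z) (z ! kI G I z) = \<sigma> (z ! kI G I z)"
  proof -
    have "who G (take (kI G I z) z) \<noteq> None \<and> info G (take (kI G I z) z) = I" using K(2) by (simp add: inI_def)
    then show ?thesis by (simp add: ap_upd)
  qed
  finally show ?thesis .
qed

lemma reach_upd_F: assumes "efg G" "z \<in> nodes G" "\<not> thr G I z"
  shows "reach G (\<tau>(I := \<sigma>)) z = reach G \<tau> z"
  unfolding reach_def
proof (rule prod.cong[OF refl])
  fix k assume "k \<in> {..<length z}"
  then have "k < length z" by simp
  then have "take k z \<notin> inI G I" using assms(3) by (auto simp: thr_def)
  then show "actprob G (\<tau>(I := \<sigma>)) (take k z) (z ! k) = actprob G \<tau> (take k z) (z ! k)"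
    using ap_upd_take[OF assms(1,2) \<open>k < length z\<close>] by blast
qed

lemma Qf_upd: assumes "efg G" "noabs G" "z \<in> nodes G" "thr G I z"
  shows "Qf G (\<tau>(I := \<sigma>)) I z = Qf G \<tau> I z"
  unfolding Qf_def
proof (rule prod.cong[OF refl])
  note K = kI[OF assms(2,3,4)]
  fix k assume "k \<in> {..<length z} - {kI G I z}"
  then have "k < length z" "k \<noteq> kI G I z" by auto
  then have "take k z \<notin> inI G I" using K(3) by blast
  then show "actprob G (\<tau>(I := \<sigma>)) (take k z) (z ! k) = actprob G \<tau> (take k z) (z ! k)"
    using ap_upd_take[OF assms(1,3) \<open>k < length z\<close>] by blast
qed

lemma thr_iacts: assumes "efg G" "noabs G" "z \<in> nodes G" "thr G I z"
  shows "z ! kI G I z \<in> iacts G I"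
proof -
  note K = kI[OF assms(2-4)]
  have "iacts G I = acts G (take (kI G I z) z)" using iacts_eq[OF assms(1) K(2)] .
  then show ?thesis using take_child(1)[OF assms(1,3) K(1)] by simp
qed

definition Aterm :: "('a, 'p, 'i) game \<Rightarrow> 'p \<Rightarrow> ('i, 'a) profile \<Rightarrow> 'i \<Rightarrow> real" where
  "Aterm G i \<tau> I = (\<Sum>z \<in> {z \<in> leaves G. \<not> thr G I z}. reach G \<tau> z * util G i z)"

definition Bterm :: "('a, 'p, 'i) game \<Rightarrow> 'p \<Rightarrow> ('i, 'a) profile \<Rightarrow> 'i \<Rightarrow> 'a \<Rightarrow> real" where
  "Bterm G i \<tau> I a = (\<Sum>z \<in> {z \<in> leaves G. thr G I z \<and> z ! kI G I z = a}. Qf G \<tau> I z * util G i z)"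

lemma leaves_nodes: "z \<in> leaves G \<Longrightarrow> z \<in> nodes G" by (simp add: leaves_def)

lemma U_upd: assumes "efg G" "noabs G"
  shows "U G i (\<tau>(I := \<sigma>)) = Aterm G i \<tau> I + (\<Sum>a \<in> iacts G I. \<sigma> a * Bterm G i \<tau> I a)"
proof -
  let ?L = "leaves G"
  let ?\<tau> = "\<tau>(I := \<sigma>)"
  have fL: "finite ?L" using finite_leaves[OF assms(1)] .
  have "U G i ?\<tau> = (\<Sum>z \<in> {z \<in> ?L. \<not> thr G I z} \<union> {z \<in> ?L. thr G I z}. reach G ?\<tau> z * util G i z)"
    unfolding U_def by (rule sum.cong) auto
  also have "\<dots> = (\<Sum>z \<in> {z \<in> ?L. \<not> thr G I z}. reach G ?\<tau> z * util G i z)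
      + (\<Sum>z \<in> {z \<in> ?L. thr G I z}. reach G ?\<tau> z * util G i z)"
    by (rule sum.union_disjoint) (use fL in auto)
  also have "(\<Sum>z \<in> {z \<in> ?L. \<not> thr G I z}. reach G ?\<tau> z * util G i z) = Aterm G i \<tau> I"
    unfolding Aterm_def by (rule sum.cong[OF refl]) (use reach_upd_F[OF assms(1) leaves_nodes] in auto)
  also have "(\<Sum>z \<in> {z \<in> ?L. thr G I z}. reach G ?\<tau> z * util G i z)
     = (\<Sum>z \<in> {z \<in> ?L. thr G I z}. \<sigma> (z ! kI G I z) * (Qf G \<tau> I z * util G i z))"
    by (rule sum.cong[OF refl]) (use reach_upd_T[OF assms leaves_nodes] in auto)
  also have "\<dots> = (\<Sum>a \<in> iacts G I. \<Sum>z \<in> {z \<in> {z \<in> ?L. thr G I z}. z ! kI G I z = a}. \<sigma> (z ! kI G I z) * (Qf G \<tau> I z * util G i z))"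
    by (rule sum.group[symmetric]) (use fL finite_iacts[OF assms(1)] thr_iacts[OF assms leaves_nodes] in auto)
  also have "\<dots> = (\<Sum>a \<in> iacts G I. \<sigma> a * Bterm G i \<tau> I a)"
    unfolding Bterm_def sum_distrib_left by (rule sum.cong[OF refl], rule sum.cong) auto
  finally show ?thesis .
qed

lemma Aterm_upd: assumes "efg G" "noabs G" shows "Aterm G i (\<tau>(I := \<sigma>)) I = Aterm G i \<tau> I"
  unfolding Aterm_def by (rule sum.cong[OF refl]) (use reach_upd_F[OF assms(1) leaves_nodes] in auto)

lemma Bterm_upd: assumes "efg G" "noabs G" shows "Bterm G i (\<tau>(I := \<sigma>)) I a = Bterm G i \<tau> I a"
  unfolding Bterm_def by (rule sum.cong[OF refl]) (use Qf_upd[OF assms leaves_nodes] in auto)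

lemma U_eq: assumes "efg G" "noabs G"
  shows "U G i \<tau> = Aterm G i \<tau> I + (\<Sum>a \<in> iacts G I. \<tau> I a * Bterm G i \<tau> I a)"
  using U_upd[OF assms, of i \<tau> I "\<tau> I"] by simp

lemma U_diff: assumes "efg G" "noabs G"
  shows "U G i (\<tau>(I := \<sigma>)) - U G i \<tau> = (\<Sum>a \<in> iacts G I. (\<sigma> a - \<tau> I a) * Bterm G i \<tau> I a)"
  using U_upd[OF assms, of i \<tau> I \<sigma>] U_eq[OF assms, of i \<tau> I]
  by (simp add: sum_subtractf left_diff_distrib)

lemma Bterm_nonneg: assumes "efg G" "noabs G" "profile G \<tau>" shows "0 \<le> Bterm G i \<tau> I a"
  unfolding Bterm_def Qf_def
proof (rule sum_nonneg)
  fix z assume z: "z \<in> {z \<in> leaves G. thr G I z \<and> z ! kI G I z = a}"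
  then have "z \<in> nodes G" "0 \<le> util G i z" using assms(1) by (auto simp: leaves_def efg_def)
  then show "0 \<le> (\<Prod>k\<in>{..<length z} - {kI G I z}. actprob G \<tau> (take k z) (z ! k)) * util G i z"
    using prod_take_bounds(1)[OF assms(1,3), of z "{..<length z} - {kI G I z}"] by auto
qed

lemma dU_eq: assumes "efg G" "noabs G" "a \<in> iacts G I"
  shows "dU G i \<tau> I a = Bterm G i \<tau> I a"
proof -
  let ?C = "Aterm G i \<tau> I + (\<Sum>b \<in> iacts G I - {a}. \<tau> I b * Bterm G i \<tau> I b)"
  have "(\<lambda>t. U G i (\<tau>(I := (\<tau> I)(a := t)))) = (\<lambda>t. ?C + t * Bterm G i \<tau> I a)"
  proof
    fix t
    have "U G i (\<tau>(I := (\<tau> I)(a := t))) = Aterm G i \<tau> I + (\<Sum>b \<in> iacts G I. ((\<tau> I)(a := t)) b * Bterm G i \<tau> I b)"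
      by (rule U_upd[OF assms(1,2)])
    also have "(\<Sum>b \<in> iacts G I. ((\<tau> I)(a := t)) b * Bterm G i \<tau> I b)
        = t * Bterm G i \<tau> I a + (\<Sum>b \<in> iacts G I - {a}. \<tau> I b * Bterm G i \<tau> I b)"
      using assms(3) finite_iacts[OF assms(1)] by (subst sum.remove[of _ a]) (auto intro!: sum.cong)
    finally have "U G i (\<tau>(I := (\<tau> I)(a := t))) = Aterm G i \<tau> I + (t * Bterm G i \<tau> I a + (\<Sum>b \<in> iacts G I - {a}. \<tau> I b * Bterm G i \<tau> I b))" .
    then show "U G i (\<tau>(I := (\<tau> I)(a := t))) = ?C + t * Bterm G i \<tau> I a" by linarith
  qed
  moreover have "((\<lambda>t. ?C + t * Bterm G i \<tau> I a) has_real_derivative Bterm G i \<tau> I a) (at x)" for x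
    by (auto intro!: derivative_eq_intros)
  ultimately show ?thesis unfolding dU_def by (simp add: DERIV_imp_deriv)
qed

lemma UCDT_eq: assumes "efg G" "noabs G"
  shows "UCDT G i \<tau> I \<sigma> = U G i (\<tau>(I := \<sigma>))"
  unfolding UCDT_def using U_diff[OF assms, of i \<tau> I \<sigma>] dU_eq[OF assms] by (simp add: algebra_simps)

lemma U_diff_dU: assumes "efg G" "noabs G"
  shows "U G i (\<tau>(I := \<sigma>)) - U G i \<tau> = (\<Sum>a \<in> iacts G I. (\<sigma> a - \<tau> I a) * dU G i \<tau> I a)"
  unfolding U_diff[OF assms] by (rule sum.cong[OF refl]) (simp add: dU_eq[OF assms])

lemma profile_behav: "profile G \<pi> \<Longrightarrow> I \<in> infosets G i \<Longrightarrow> behav G I (\<pi> I)"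
  by (simp add: profile_def infosets_all)

lemma EDT_CDT_eq: assumes "efg G" "noabs G" shows "EDT_eq G \<pi> \<longleftrightarrow> CDT_eq G \<pi>"
proof
  assume E: "EDT_eq G \<pi>"
  then have P: "profile G \<pi>" by (simp add: EDT_eq_def)
  show "CDT_eq G \<pi>" unfolding CDT_eq_def
  proof (intro conjI allI)
    show "profile G \<pi>" by fact
    fix i
    define lam where "lam I = Max (dU G i \<pi> I ` iacts G I)" for I
    define mu where "mu I a = lam I - dU G i \<pi> I a" for I a
    have "\<forall>I\<in>infosets G i. \<forall>a\<in>iacts G I. dU G i \<pi> I a + mu I a = lam I \<and> 0 \<le> mu I a \<and> mu I a * \<pi> I a = 0"
    proof (intro ballI conjI)
      fix I a assume I: "I \<in> infosets G i" and a: "a \<in> iacts G I"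
      have fin: "finite (iacts G I)" and ne: "iacts G I \<noteq> {}" using finite_iacts[OF assms(1)] iacts_ne[OF assms(1) I] .
      show "dU G i \<pi> I a + mu I a = lam I" by (simp add: mu_def)
      have ge: "dU G i \<pi> I b \<le> lam I" if "b \<in> iacts G I" for b
        unfolding lam_def using fin that by (intro Max_ge) auto
      then show "0 \<le> mu I a" using a by (simp add: mu_def)
      have "lam I \<in> dU G i \<pi> I ` iacts G I" unfolding lam_def using fin ne by (intro Max_in) auto
      then obtain s where s: "s \<in> iacts G I" "dU G i \<pi> I s = lam I" by auto
      define \<sigma> where "\<sigma> = (\<lambda>b. if b = s then 1 else 0::real)"
      have b: "behav G I \<sigma>" unfolding behav_def \<sigma>_def using s(1) fin by (auto simp: sum.delta)
      have "U G i (\<pi>(I := \<sigma>)) \<le> U G i \<pi>" using E I b unfolding EDT_eq_def by blast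
      then have "(\<Sum>b \<in> iacts G I. (\<sigma> b - \<pi> I b) * dU G i \<pi> I b) \<le> 0"
        using U_diff_dU[OF assms, of i \<pi> I \<sigma>] by linarith
      moreover have "(\<Sum>b \<in> iacts G I. (\<sigma> b - \<pi> I b) * dU G i \<pi> I b) =
          (\<Sum>b \<in> iacts G I. \<pi> I b * (lam I - dU G i \<pi> I b))"
      proof -
        have pb: "behav G I (\<pi> I)" using profile_behav[OF P I] .
        have "(\<Sum>b \<in> iacts G I. (\<sigma> b - \<pi> I b) * dU G i \<pi> I b) =
            (\<Sum>b \<in> iacts G I. \<sigma> b * dU G i \<pi> I b) - (\<Sum>b \<in> iacts G I. \<pi> I b * dU G i \<pi> I b)"
          by (simp add: sum_subtractf left_diff_distrib)
        also have "(\<Sum>b \<in> iacts G I. \<sigma> b * dU G i \<pi> I b) = lam I"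
        proof -
          have "(\<Sum>b \<in> iacts G I. \<sigma> b * dU G i \<pi> I b) = (\<Sum>b \<in> iacts G I. if b = s then dU G i \<pi> I b else 0)"
            by (rule sum.cong) (auto simp: \<sigma>_def)
          then show ?thesis using s fin by (simp add: sum.delta)
        qed
        also have "lam I = (\<Sum>b \<in> iacts G I. \<pi> I b * lam I)"
          using pb by (simp add: behav_def sum_distrib_right[symmetric])
        finally show ?thesis by (simp add: sum_subtractf right_diff_distrib)
      qed
      ultimately have le: "(\<Sum>b \<in> iacts G I. \<pi> I b * (lam I - dU G i \<pi> I b)) \<le> 0" by simp
      have nn: "\<forall>b\<in>iacts G I. 0 \<le> \<pi> I b * (lam I - dU G i \<pi> I b)"
        using profile_behav[OF P I] ge by (auto simp: behav_def)
      then have "(\<Sum>b \<in> iacts G I. \<pi> I b * (lam I - dU G i \<pi> I b)) \<ge> 0"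
        by (intro sum_nonneg) blast
      then have "(\<Sum>b \<in> iacts G I. \<pi> I b * (lam I - dU G i \<pi> I b)) = 0"
        using le by linarith
      then have "\<forall>b\<in>iacts G I. \<pi> I b * (lam I - dU G i \<pi> I b) = 0"
        using sum_nonneg_eq_0_iff[OF fin, of "\<lambda>b. \<pi> I b * (lam I - dU G i \<pi> I b)"] nn by simp
      then show "mu I a * \<pi> I a = 0" using a by (simp add: mu_def mult.commute)
    qed
    then show "\<exists>lam \<mu>. \<forall>I \<in> infosets G i. \<forall>a \<in> iacts G I.
        dU G i \<pi> I a + \<mu> I a = lam I \<and> 0 \<le> \<mu> I a \<and> \<mu> I a * \<pi> I a = 0" by blast
  qed
next
  assume C: "CDT_eq G \<pi>"
  then have P: "profile G \<pi>" by (simp add: CDT_eq_def)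
  show "EDT_eq G \<pi>" unfolding EDT_eq_def
  proof (intro conjI allI ballI impI)
    show "profile G \<pi>" by fact
    fix i I \<sigma> assume I: "I \<in> infosets G i" and b: "behav G I \<sigma>"
    obtain lam mu where LM: "\<forall>I \<in> infosets G i. \<forall>a \<in> iacts G I.
        dU G i \<pi> I a + mu I a = lam I \<and> 0 \<le> mu I a \<and> mu I a * \<pi> I a = 0"
      using C unfolding CDT_eq_def by blast
    have pb: "behav G I (\<pi> I)" using profile_behav[OF P I] .
    have "(\<Sum>a \<in> iacts G I. (\<sigma> a - \<pi> I a) * dU G i \<pi> I a) =
        (\<Sum>a \<in> iacts G I. (\<sigma> a - \<pi> I a) * (lam I - mu I a))"
    proof (rule sum.cong[OF refl])
      fix a assume a: "a \<in> iacts G I"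
      have "dU G i \<pi> I a = lam I - mu I a" using LM I a by force
      then show "(\<sigma> a - \<pi> I a) * dU G i \<pi> I a = (\<sigma> a - \<pi> I a) * (lam I - mu I a)" by simp
    qed
    also have "\<dots> = lam I * (\<Sum>a \<in> iacts G I. \<sigma> a) - lam I * (\<Sum>a \<in> iacts G I. \<pi> I a)
        - (\<Sum>a \<in> iacts G I. \<sigma> a * mu I a) + (\<Sum>a \<in> iacts G I. mu I a * \<pi> I a)"
      by (simp add: algebra_simps sum_subtractf sum_distrib_left sum.distrib)
    also have "(\<Sum>a \<in> iacts G I. mu I a * \<pi> I a) = 0" using LM I by (intro sum.neutral) blast
    also have "(\<Sum>a \<in> iacts G I. \<sigma> a * mu I a) \<ge> 0"
      using LM I b by (intro sum_nonneg) (auto simp: behav_def)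
    finally have "(\<Sum>a \<in> iacts G I. (\<sigma> a - \<pi> I a) * dU G i \<pi> I a) \<le> 0"
      using b pb by (simp add: behav_def)
    then show "U G i (\<pi>(I := \<sigma>)) \<le> U G i \<pi>" using U_diff_dU[OF assms, of i \<pi> I \<sigma>] by linarith
  qed
qed

lemma EDT_CDT_rational: assumes "efg G" "noabs G" shows "EDT_rational G i \<rho> \<longleftrightarrow> CDT_rational G i \<rho>"
  unfolding EDT_rational_def CDT_rational_def PI_Fr[OF assms] UCDT_eq[OF assms] ..

lemma EDT_CDT_Nash: assumes "efg G" "noabs G" shows "EDT_Nash G \<pi> \<longleftrightarrow> CDT_Nash G \<pi>"
  unfolding EDT_Nash_def CDT_Nash_def EDT_CDT_eq[OF assms] EDT_CDT_rational[OF assms] ..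

lemma obs_take: assumes "m \<le> length z" shows "obs G (take m z) = take m (obs G z)"
proof -
  have "take m (obs G z) = map (\<lambda>k. (who G (take k z), info G (take k z), z ! k)) [0..<m]"
    unfolding obs_def using assms by (simp add: take_map min_absorb1)
  also have "\<dots> = obs G (take m z)"
    unfolding obs_def using assms by (intro map_cong) (auto simp: min_absorb1)
  finally show ?thesis by simp
qed

lemma obs_nth: "k < length z \<Longrightarrow> obs G z ! k = (who G (take k z), info G (take k z), z ! k)"
  by (simp add: obs_def)

lemma obs_i_len_lt: fixes G :: "('a, 'p, 'i) game" assumes "k1 < k2" "k2 \<le> length z" "who G (take k1 z) = Some i"
  shows "length (obs_i G i (take k1 z)) < length (obs_i G i (take k2 z))"
proof -
  define xs where "xs = obs G z"
  define P where "P = (\<lambda>x::('p option \<times> 'i \<times> 'a). fst x = Some i)"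
  have fP: "obs_i G i h = filter P (obs G h)" for h
    unfolding obs_i_def P_def by (rule filter_cong) auto
  have l: "length xs = length z" by (simp add: obs_def xs_def)
  have "take k2 xs = take (Suc k1) xs @ drop (Suc k1) (take k2 xs)"
    using assms(1) by (metis append_take_drop_id min_absorb1 Suc_leI take_take)
  also have "take (Suc k1) xs = take k1 xs @ [xs ! k1]"
    using assms(1,2) l by (simp add: take_Suc_conv_app_nth)
  finally have "take k2 xs = take k1 xs @ [xs ! k1] @ drop (Suc k1) (take k2 xs)" by simp
  then obtain ys where e: "take k2 xs = take k1 xs @ [xs ! k1] @ ys" by blast
  have "xs ! k1 = (who G (take k1 z), info G (take k1 z), z ! k1)"
    unfolding xs_def by (rule obs_nth) (use assms(1,2) in simp)
  then have p: "P (xs ! k1)" using assms(3) by (simp add: P_def)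
  have o2: "obs G (take k2 z) = take k2 xs" unfolding xs_def by (rule obs_take[OF assms(2)])
  have k1l: "k1 \<le> length z" using assms(1,2) by simp
  have o1: "obs G (take k1 z) = take k1 xs" unfolding xs_def by (rule obs_take[OF k1l])
  have "length (filter P (take k2 xs)) = length (filter P (take k1 xs)) + 1 + length (filter P ys)"
    unfolding e using p by simp
  then show ?thesis unfolding fP o1 o2 by linarith
qed

lemma PR_noabs: assumes "efg G" "perfect_recall G" shows "noabs G"
proof -
  have "k1 = k2" if z: "z \<in> nodes G" and k: "k1 < k2" "k2 < length z"
    and t: "take k1 z \<in> inI G I" "take k2 z \<in> inI G I" for z k1 k2 I
  proof -
    obtain j where j: "who G (take k1 z) = Some j" using t(1) by (auto simp: inI_def)
    have "who G (take k2 z) = who G (take k1 z)"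
      using efg_same[OF assms(1), of "take k2 z" "take k1 z"] t by (auto simp: inI_def)
    then have "take k1 z \<in> pnodes G j" "take k2 z \<in> pnodes G j" using j t by (auto simp: inI_def pnodes_def)
    moreover have "info G (take k1 z) = info G (take k2 z)" using t by (simp add: inI_def)
    ultimately have "obs_i G j (take k1 z) = obs_i G j (take k2 z)"
      using assms(2) unfolding perfect_recall_def by blast
    moreover have "length (obs_i G j (take k1 z)) < length (obs_i G j (take k2 z))"
      using obs_i_len_lt[OF k(1) _ j] k by simp
    ultimately show ?thesis by simp
  qed
  then show ?thesis unfolding noabs_def by (metis linorder_neqE_nat)
qed

definition own :: "('a, 'p, 'i) game \<Rightarrow> 'p \<Rightarrow> ('i, 'a) profile \<Rightarrow> 'a list \<Rightarrow> real" where
  "own G i \<tau> h = (\<Prod>k \<in> {k. k < length h \<and> who G (take k h) = Some i}. actprob G \<tau> (take k h) (h ! k))"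

definition oth :: "('a, 'p, 'i) game \<Rightarrow> 'p \<Rightarrow> ('i, 'a) profile \<Rightarrow> 'a list \<Rightarrow> real" where
  "oth G i \<tau> h = (\<Prod>k \<in> {k. k < length h \<and> who G (take k h) \<noteq> Some i}. actprob G \<tau> (take k h) (h ! k))"

lemma reach_split: "reach G \<tau> h = own G i \<tau> h * oth G i \<tau> h"
proof -
  have "{..<length h} = {k. k < length h \<and> who G (take k h) = Some i} \<union> {k. k < length h \<and> who G (take k h) \<noteq> Some i}"
    by auto
  then show ?thesis unfolding reach_def own_def oth_def
    by (simp add: prod.union_disjoint[symmetric] disjoint_iff)
qed

lemma own_obs: "own G i \<tau> h = prod_list (map (\<lambda>(_, J, a). \<tau> J a) (obs_i G i h))"
proof -
  let ?Q = "\<lambda>k. who G (take k h) = Some i"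
  have "obs_i G i h = map (\<lambda>k. (who G (take k h), info G (take k h), h ! k)) (filter ?Q [0..<length h])"
    unfolding obs_i_def obs_def by (simp add: filter_map o_def)
  then have "prod_list (map (\<lambda>(_, J, a). \<tau> J a) (obs_i G i h)) =
      prod_list (map (\<lambda>k. \<tau> (info G (take k h)) (h ! k)) (filter ?Q [0..<length h]))"
    by (simp add: o_def)
  also have "\<dots> = (\<Prod>k \<in> set (filter ?Q [0..<length h]). \<tau> (info G (take k h)) (h ! k))"
    by (rule prod.distinct_set_conv_list[symmetric]) simp
  also have "\<dots> = own G i \<tau> h"
    unfolding own_def by (rule prod.cong) (auto simp: actprob_def)
  finally show ?thesis by simp
qed

lemma own_const: assumes "perfect_recall G" "h \<in> pnodes G i" "h' \<in> pnodes G i" "info G h = info G h'"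
  shows "own G i \<tau> h = own G i \<tau> h'"
proof -
  have "obs_i G i h = obs_i G i h'" using assms unfolding perfect_recall_def by blast
  then show ?thesis by (simp add: own_obs)
qed

definition rf :: "('a, 'p, 'i) game \<Rightarrow> ('i, 'a) profile \<Rightarrow> 'i \<Rightarrow> 'a list \<Rightarrow> real" where
  "rf G \<tau> I z = (\<Prod>k \<in> {kI G I z<..<length z}. actprob G \<tau> (take k z) (z ! k))"

definition Wt :: "('a, 'p, 'i) game \<Rightarrow> 'p \<Rightarrow> ('i, 'a) profile \<Rightarrow> 'i \<Rightarrow> 'a \<Rightarrow> real" where
  "Wt G i \<tau> I a = (\<Sum>z \<in> {z \<in> leaves G. thr G I z \<and> z ! kI G I z = a}.
       oth G i \<tau> (take (kI G I z) z) * rf G \<tau> I z * util G i z)"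

definition ownI :: "('a, 'p, 'i) game \<Rightarrow> 'p \<Rightarrow> ('i, 'a) profile \<Rightarrow> 'i \<Rightarrow> real" where
  "ownI G i \<tau> I = own G i \<tau> (SOME h. h \<in> inI G I)"

definition Oth :: "('a, 'p, 'i) game \<Rightarrow> 'p \<Rightarrow> ('i, 'a) profile \<Rightarrow> 'i \<Rightarrow> real" where
  "Oth G i \<tau> I = (\<Sum>h \<in> inI G I. oth G i \<tau> h)"

definition dep :: "('a, 'p, 'i) game \<Rightarrow> 'p \<Rightarrow> 'a list \<Rightarrow> nat" where
  "dep G i h = length (obs_i G i h)"

definition dI :: "('a, 'p, 'i) game \<Rightarrow> 'p \<Rightarrow> 'i \<Rightarrow> nat" where
  "dI G i I = dep G i (SOME h. h \<in> inI G I)"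

lemma Qf_split: assumes "efg G" "noabs G" "z \<in> nodes G" "thr G I z"
  shows "Qf G \<tau> I z = reach G \<tau> (take (kI G I z) z) * rf G \<tau> I z"
proof -
  note K = kI[OF assms(2-4)]
  let ?k = "kI G I z"
  have se: "{..<length z} - {?k} = {..<?k} \<union> {?k<..<length z}" using K(1) by auto
  have "Qf G \<tau> I z = (\<Prod>k \<in> {..<?k} \<union> {?k<..<length z}. actprob G \<tau> (take k z) (z ! k))"
    unfolding Qf_def se ..
  also have "\<dots> = (\<Prod>k \<in> {..<?k}. actprob G \<tau> (take k z) (z ! k)) * rf G \<tau> I z"
    unfolding rf_def by (rule prod.union_disjoint) auto
  finally have "Qf G \<tau> I z = (\<Prod>k \<in> {..<?k}. actprob G \<tau> (take k z) (z ! k)) * rf G \<tau> I z" .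
  moreover have "(\<Prod>k \<in> {..<?k}. actprob G \<tau> (take k z) (z ! k)) = reach G \<tau> (take ?k z)"
    unfolding reach_def using K(1) by (intro prod.cong) (auto simp: min_absorb1 min_absorb2)
  ultimately show ?thesis by simp
qed

lemma SOME_inI: "h \<in> inI G I \<Longrightarrow> (SOME h. h \<in> inI G I) \<in> inI G I"
  by (rule someI)

lemma own_inI: assumes "efg G" "perfect_recall G" "I \<in> infosets G i" "h \<in> inI G I"
  shows "own G i \<tau> h = ownI G i \<tau> I"
proof -
  have s: "(SOME h. h \<in> inI G I) \<in> inI G I" using SOME_inI[OF assms(4)] .
  show ?thesis unfolding ownI_def
    by (rule own_const[OF assms(2) inI_pnodes[OF assms(1,3,4)] inI_pnodes[OF assms(1,3) s]])
      (use assms(4) s in \<open>simp add: inI_def\<close>)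
qed

lemma dep_inI: assumes "efg G" "perfect_recall G" "I \<in> infosets G i" "h \<in> inI G I"
  shows "dep G i h = dI G i I"
proof -
  have s: "(SOME h. h \<in> inI G I) \<in> inI G I" using SOME_inI[OF assms(4)] .
  have "info G h = info G (SOME h. h \<in> inI G I)" using assms(4) s by (simp add: inI_def)
  then have "obs_i G i h = obs_i G i (SOME h. h \<in> inI G I)"
    using assms(2) inI_pnodes[OF assms(1,3,4)] inI_pnodes[OF assms(1,3) s]
    unfolding perfect_recall_def by blast
  then show ?thesis by (simp add: dI_def dep_def)
qed

lemma Bterm_split: assumes "efg G" "perfect_recall G" "I \<in> infosets G i"
  shows "Bterm G i \<tau> I a = ownI G i \<tau> I * Wt G i \<tau> I a"
proof -
  have na: "noabs G" using PR_noabs[OF assms(1,2)] .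
  show ?thesis unfolding Bterm_def Wt_def sum_distrib_left
  proof (rule sum.cong[OF refl])
    fix z assume z: "z \<in> {z \<in> leaves G. thr G I z \<and> z ! kI G I z = a}"
    then have zn: "z \<in> nodes G" "thr G I z" by (auto simp: leaves_def)
    note K = kI[OF na zn]
    have "Qf G \<tau> I z = own G i \<tau> (take (kI G I z) z) * oth G i \<tau> (take (kI G I z) z) * rf G \<tau> I z"
      using Qf_split[OF assms(1) na zn] reach_split[of G \<tau> _ i] by simp
    also have "own G i \<tau> (take (kI G I z) z) = ownI G i \<tau> I" using own_inI[OF assms K(2)] .
    finally show "Qf G \<tau> I z * util G i z = ownI G i \<tau> I * (oth G i \<tau> (take (kI G I z) z) * rf G \<tau> I z * util G i z)"
      by simp
  qed
qed

lemma Fr_split: assumes "efg G" "perfect_recall G" "I \<in> infosets G i"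
  shows "Fr G \<tau> I = ownI G i \<tau> I * Oth G i \<tau> I"
  unfolding Fr_def Oth_def sum_distrib_left
  by (rule sum.cong[OF refl]) (simp add: reach_split[of G \<tau> _ i] own_inI[OF assms])

lemma oth_eq: assumes "efg G" "h \<in> nodes G" "\<And>J. J \<notin> infosets G i \<Longrightarrow> \<tau> J = \<tau>' J"
  shows "oth G i \<tau> h = oth G i \<tau>' h"
  unfolding oth_def
proof (rule prod.cong[OF refl])
  fix k assume k: "k \<in> {k. k < length h \<and> who G (take k h) \<noteq> Some i}"
  show "actprob G \<tau> (take k h) (h ! k) = actprob G \<tau>' (take k h) (h ! k)"
  proof (cases "who G (take k h)")
    case None then show ?thesis by (simp add: actprob_def)
  next
    case (Some j)
    then have "j \<noteq> i" using k by simp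
    then have "info G (take k h) \<notin> infosets G i"
      using not_inf_other[OF assms(1) take_node[OF assms(1,2)] take_child(2)[OF assms(1,2)] Some] k by simp
    then show ?thesis using Some assms(3) by (simp add: actprob_def)
  qed
qed

lemma rf_eq: assumes "efg G" "z \<in> nodes G" "\<And>J. J \<notin> infosets G i \<Longrightarrow> \<tau> J = \<tau>' J"
  "\<And>k. kI G I z < k \<Longrightarrow> k < length z \<Longrightarrow> who G (take k z) = Some i \<Longrightarrow> \<tau> (info G (take k z)) = \<tau>' (info G (take k z))"
  shows "rf G \<tau> I z = rf G \<tau>' I z"
  unfolding rf_def
proof (rule prod.cong[OF refl])
  fix k assume k: "k \<in> {kI G I z<..<length z}"
  show "actprob G \<tau> (take k z) (z ! k) = actprob G \<tau>' (take k z) (z ! k)"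
  proof (cases "who G (take k z)")
    case None then show ?thesis by (simp add: actprob_def)
  next
    case (Some j)
    show ?thesis
    proof (cases "j = i")
      case True then show ?thesis using Some assms(4) k by (simp add: actprob_def)
    next
      case False
      then have "info G (take k z) \<notin> infosets G i"
        using not_inf_other[OF assms(1) take_node[OF assms(1,2)] take_child(2)[OF assms(1,2)] Some] k by simp
      then show ?thesis using Some assms(3) by (simp add: actprob_def)
    qed
  qed
qed

lemma deeper: assumes "efg G" "perfect_recall G" "z \<in> nodes G" "thr G I z" "I \<in> infosets G i"
  "kI G I z < k" "k < length z" "who G (take k z) = Some i"
  shows "dI G i I < dI G i (info G (take k z))"
proof -
  have na: "noabs G" using PR_noabs[OF assms(1,2)] .
  note K = kI[OF na assms(3,4)]
  have w: "who G (take (kI G I z) z) = Some i" using inI_who[OF assms(1,5) K(2)] .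
  have "dep G i (take (kI G I z) z) < dep G i (take k z)"
    unfolding dep_def using obs_i_len_lt[OF assms(6) _ w] assms(7) by simp
  moreover have "dep G i (take (kI G I z) z) = dI G i I" using dep_inI[OF assms(1,2,5) K(2)] .
  moreover have "take k z \<in> pnodes G i"
    using take_node[OF assms(1,3)] take_child(2)[OF assms(1,3,7)] assms(8) by (simp add: pnodes_def)
  then have "dep G i (take k z) = dI G i (info G (take k z))"
    using dep_inI[OF assms(1,2)] pnodes_inI[of "take k z" G i] by blast
  ultimately show ?thesis by simp
qed

lemma own_bounds: assumes "efg G" "profile G \<tau>" "h \<in> nodes G"
  shows "0 \<le> own G i \<tau> h" "own G i \<tau> h \<le> 1"
  unfolding own_def using prod_take_bounds[OF assms, of "{k. k < length h \<and> who G (take k h) = Some i}"] by auto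

lemma oth_bounds: assumes "efg G" "profile G \<tau>" "h \<in> nodes G"
  shows "0 \<le> oth G i \<tau> h" "oth G i \<tau> h \<le> 1"
  unfolding oth_def using prod_take_bounds[OF assms, of "{k. k < length h \<and> who G (take k h) \<noteq> Some i}"] by auto

lemma own_lower: assumes "efg G" "h \<in> nodes G" "0 \<le> \<theta>"
  "\<And>I a. I \<in> infosets G i \<Longrightarrow> a \<in> iacts G I \<Longrightarrow> \<theta> \<le> \<tau> I a"
  shows "\<theta> ^ card {k. k < length h \<and> who G (take k h) = Some i} \<le> own G i \<tau> h"
proof -
  have "(\<Prod>k \<in> {k. k < length h \<and> who G (take k h) = Some i}. \<theta>) \<le> own G i \<tau> h"
    unfolding own_def
  proof (rule prod_mono, rule conjI)
    fix k assume k: "k \<in> {k. k < length h \<and> who G (take k h) = Some i}"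
    have tp: "take k h \<in> pnodes G i"
      using take_node[OF assms(1,2)] take_child(2)[OF assms(1,2)] k by (simp add: pnodes_def)
    then have "info G (take k h) \<in> infosets G i" "h ! k \<in> iacts G (info G (take k h))"
      using pnodes_inI[OF tp] iacts_eq[OF assms(1)] take_child(1)[OF assms(1,2)] k by auto
    then show "\<theta> \<le> actprob G \<tau> (take k h) (h ! k)" using assms(4) k by (simp add: actprob_def)
  qed (use assms(3) in simp)
  then show ?thesis by simp
qed

lemma own_pos: assumes "efg G" "h \<in> nodes G"
  "\<And>I a. I \<in> infosets G i \<Longrightarrow> a \<in> iacts G I \<Longrightarrow> 0 < \<tau> I a"
  shows "0 < own G i \<tau> h"
  unfolding own_def
proof (rule prod_pos)
  fix k assume k: "k \<in> {k. k < length h \<and> who G (take k h) = Some i}"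
  have tp: "take k h \<in> pnodes G i"
    using take_node[OF assms(1,2)] take_child(2)[OF assms(1,2)] k by (simp add: pnodes_def)
  then have "info G (take k h) \<in> infosets G i" "h ! k \<in> iacts G (info G (take k h))"
    using pnodes_inI[OF tp] iacts_eq[OF assms(1)] take_child(1)[OF assms(1,2)] k by auto
  then show "0 < actprob G \<tau> (take k h) (h ! k)" using assms(3) k by (simp add: actprob_def)
qed

lemma SOME_inI_nodes: "h \<in> inI G I \<Longrightarrow> (SOME h. h \<in> inI G I) \<in> nodes G"
  using SOME_inI[of h G I] inI_node[of "SOME h. h \<in> inI G I" G I] by blast

lemma ownI_bounds: assumes "efg G" "profile G \<tau>" "I \<in> infosets G i"
  shows "0 \<le> ownI G i \<tau> I" "ownI G i \<tau> I \<le> 1"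
proof -
  obtain h where "h \<in> pnodes G i" "info G h = I" using assms(3) by (auto simp: infosets_def)
  then have "h \<in> inI G I" using pnodes_inI[of h G i] by blast
  then have "(SOME h. h \<in> inI G I) \<in> nodes G" by (rule SOME_inI_nodes)
  then show "0 \<le> ownI G i \<tau> I" "ownI G i \<tau> I \<le> 1" unfolding ownI_def using own_bounds[OF assms(1,2)] by auto
qed

lemma ownI_pos: assumes "efg G" "I \<in> infosets G i"
  "\<And>I a. I \<in> infosets G i \<Longrightarrow> a \<in> iacts G I \<Longrightarrow> 0 < \<tau> I a"
  shows "0 < ownI G i \<tau> I"
proof -
  obtain h where "h \<in> pnodes G i" "info G h = I" using assms(2) by (auto simp: infosets_def)
  then have "h \<in> inI G I" using pnodes_inI[of h G i] by blast
  then have "(SOME h. h \<in> inI G I) \<in> nodes G" by (rule SOME_inI_nodes)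
  then show ?thesis unfolding ownI_def using own_pos[OF assms(1) _ assms(3)] by auto
qed

lemma Oth_nonneg: assumes "efg G" "profile G \<tau>" shows "0 \<le> Oth G i \<tau> I"
  unfolding Oth_def by (rule sum_nonneg) (use oth_bounds[OF assms] in \<open>auto simp: inI_def\<close>)

lemma profile_upd: assumes "profile G \<tau>" "behav G I \<sigma>" shows "profile G (\<tau>(I := \<sigma>))"
  using assms unfolding profile_def by auto

lemma PD: assumes "efg G" "perfect_recall G" "profile G p"
  and pos: "\<And>I a. I \<in> infosets G i \<Longrightarrow> a \<in> iacts G I \<Longrightarrow> 0 < p I a"
  and eps: "0 \<le> \<epsilon>"
  and EC: "\<And>I \<sigma>. I \<in> infosets G i \<Longrightarrow> PI G p I > 0 \<Longrightarrow> behav G I \<sigma> \<Longrightarrow>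
              (U G i (p(I := \<sigma>)) - U G i p) / PI G p I \<le> \<epsilon>"
  shows "devs G i p \<tau> \<Longrightarrow> U G i \<tau> - U G i p \<le> \<epsilon> * (\<Sum>J \<in> {J \<in> infosets G i. \<tau> J \<noteq> p J}. Oth G i p J)"
proof (induction "card {J \<in> infosets G i. \<tau> J \<noteq> p J}" arbitrary: \<tau> rule: less_induct)
  case less
  have na: "noabs G" using PR_noabs[OF assms(1,2)] .
  define D where "D = {J \<in> infosets G i. \<tau> J \<noteq> p J}"
  have fD: "finite D" unfolding D_def using finite_infosets[OF assms(1)] by simp
  have Pt: "profile G \<tau>" and out: "\<And>J. J \<notin> infosets G i \<Longrightarrow> \<tau> J = p J"
    using less.prems unfolding devs_def by blast+
  show ?case
  proof (cases "D = {}")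
    case True
    have "\<tau> = p"
    proof
      fix J show "\<tau> J = p J" using out True unfolding D_def by (cases "J \<in> infosets G i") auto
    qed
    then show ?thesis by simp
  next
    case False
    have "Max (dI G i ` D) \<in> dI G i ` D" using fD False by (intro Max_in) auto
    then obtain I where I: "I \<in> D" "dI G i I = Max (dI G i ` D)" by auto
    have Imax: "dI G i J \<le> dI G i I" if "J \<in> D" for J using I(2) fD that by simp
    have IInf: "I \<in> infosets G i" using I(1) by (simp add: D_def)
    define \<tau>' where "\<tau>' = \<tau>(I := p I)"
    have pbI: "behav G I (p I)" using profile_behav[OF assms(3) IInf] .
    have tbI: "behav G I (\<tau> I)" using profile_behav[OF Pt IInf] .
    have dv: "devs G i p \<tau>'" unfolding devs_def \<tau>'_def
      using profile_upd[OF Pt pbI] out IInf by auto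
    have D': "{J \<in> infosets G i. \<tau>' J \<noteq> p J} = D - {I}" unfolding D_def \<tau>'_def by auto
    have "card (D - {I}) < card D" using fD I(1) by (meson card_Diff1_less)
    then have IH: "U G i \<tau>' - U G i p \<le> \<epsilon> * (\<Sum>J \<in> D - {I}. Oth G i p J)"
      using less.hyps[OF _ dv] unfolding D' D_def by simp
    have tt: "\<tau> = \<tau>'(I := \<tau> I)" unfolding \<tau>'_def by simp
    have tI: "\<tau>' I = p I" unfolding \<tau>'_def by simp
    have Pt': "profile G \<tau>'" using dv by (simp add: devs_def)
    have Wt_eq: "Wt G i \<tau>' I a = Wt G i p I a" for a
      unfolding Wt_def
    proof (rule sum.cong[OF refl])
      fix z assume z: "z \<in> {z \<in> leaves G. thr G I z \<and> z ! kI G I z = a}"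
      then have zn: "z \<in> nodes G" "thr G I z" by (auto simp: leaves_def)
      have o: "\<And>J. J \<notin> infosets G i \<Longrightarrow> \<tau>' J = p J" using dv by (simp add: devs_def)
      have "oth G i \<tau>' (take (kI G I z) z) = oth G i p (take (kI G I z) z)"
        by (rule oth_eq[OF assms(1) take_node[OF assms(1) zn(1)] o])
      moreover have "rf G \<tau>' I z = rf G p I z"
      proof (rule rf_eq[OF assms(1) zn(1) o])
        fix k assume k: "kI G I z < k" "k < length z" "who G (take k z) = Some i"
        have lt: "dI G i I < dI G i (info G (take k z))" using deeper[OF assms(1,2) zn IInf k] .
        show "\<tau>' (info G (take k z)) = p (info G (take k z))"
        proof (rule ccontr)
          assume "\<tau>' (info G (take k z)) \<noteq> p (info G (take k z))"
          moreover have "take k z \<in> pnodes G i"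
            using take_node[OF assms(1) zn(1)] take_child(2)[OF assms(1) zn(1) k(2)] k(3) by (simp add: pnodes_def)
          ultimately have "info G (take k z) \<in> D - {I}" using D' pnodes_inI[of "take k z" G i] by blast
          then show False using Imax lt by force
        qed
      qed
      ultimately show "oth G i \<tau>' (take (kI G I z) z) * rf G \<tau>' I z * util G i z =
          oth G i p (take (kI G I z) z) * rf G p I z * util G i z" by simp
    qed
    define X where "X = (\<Sum>a \<in> iacts G I. (\<tau> I a - p I a) * Wt G i p I a)"
    have d1: "U G i \<tau> - U G i \<tau>' = ownI G i \<tau>' I * X"
    proof -
      have "U G i \<tau> - U G i \<tau>' = U G i (\<tau>'(I := \<tau> I)) - U G i \<tau>'" using tt by simp
      also have "\<dots> = (\<Sum>a \<in> iacts G I. (\<tau> I a - \<tau>' I a) * Bterm G i \<tau>' I a)" by (rule U_diff[OF assms(1) na])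
      also have "\<dots> = ownI G i \<tau>' I * X" unfolding X_def sum_distrib_left
        by (rule sum.cong[OF refl]) (simp add: Bterm_split[OF assms(1,2) IInf] Wt_eq tI)
      finally show ?thesis .
    qed
    have d2: "U G i (p(I := \<tau> I)) - U G i p = ownI G i p I * X"
    proof -
      have "U G i (p(I := \<tau> I)) - U G i p = (\<Sum>a \<in> iacts G I. (\<tau> I a - p I a) * Bterm G i p I a)"
        by (rule U_diff[OF assms(1) na])
      also have "\<dots> = ownI G i p I * X" unfolding X_def sum_distrib_left
        by (rule sum.cong[OF refl]) (simp add: Bterm_split[OF assms(1,2) IInf])
      finally show ?thesis .
    qed
    have op: "0 < ownI G i p I" using ownI_pos[OF assms(1) IInf pos] .
    have ob: "0 \<le> ownI G i \<tau>' I" "ownI G i \<tau>' I \<le> 1" using ownI_bounds[OF assms(1) Pt' IInf] by auto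
    have O0: "0 \<le> Oth G i p I" using Oth_nonneg[OF assms(1,3)] .
    have step: "U G i \<tau> - U G i \<tau>' \<le> \<epsilon> * Oth G i p I"
    proof (cases "Oth G i p I = 0")
      case True
      have "oth G i p h = 0" if "h \<in> inI G I" for h
      proof -
        have nn: "\<And>h. h \<in> inI G I \<Longrightarrow> 0 \<le> oth G i p h"
          by (simp add: oth_bounds(1)[OF assms(1,3)] inI_def)
        have "(\<Sum>h\<in>inI G I. oth G i p h) = 0 \<longleftrightarrow> (\<forall>h\<in>inI G I. oth G i p h = 0)"
          by (rule sum_nonneg_eq_0_iff[OF finite_inI[OF assms(1)] nn])
        then have "\<forall>h\<in>inI G I. oth G i p h = 0" using True unfolding Oth_def by blast
        then show ?thesis using that by blast
      qed
      then have "Wt G i p I a = 0" for a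
        unfolding Wt_def using kI(2)[OF na] by (intro sum.neutral) (auto simp: leaves_def)
      then have "X = 0" unfolding X_def by simp
      then show ?thesis using d1 True by simp
    next
      case False
      then have Opos: "0 < Oth G i p I" using O0 by simp
      have PIe: "PI G p I = ownI G i p I * Oth G i p I"
        using PI_Fr[OF assms(1) na] Fr_split[OF assms(1,2) IInf] by simp
      then have "PI G p I > 0" using op Opos by simp
      then have "(U G i (p(I := \<tau> I)) - U G i p) / PI G p I \<le> \<epsilon>" using EC[OF IInf _ tbI] by blast
      then have "X / Oth G i p I \<le> \<epsilon>" unfolding d2 PIe using op by simp
      then have Xle: "X \<le> \<epsilon> * Oth G i p I" using Opos by (simp add: divide_le_eq)
      show ?thesis
      proof (cases "X \<le> 0")
        case True
        then have "ownI G i \<tau>' I * X \<le> 0" using ob by (simp add: mult_nonneg_nonpos)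
        then show ?thesis using d1 eps O0 by (metis mult_nonneg_nonneg order_trans)
      next
        case False
        then have "ownI G i \<tau>' I * X \<le> X" using ob by (simp add: mult_left_le_one_le)
        then show ?thesis using d1 Xle by linarith
      qed
    qed
    have "(\<Sum>J \<in> D. Oth G i p J) = Oth G i p I + (\<Sum>J \<in> D - {I}. Oth G i p J)"
      using fD I(1) by (simp add: sum.remove)
    then have "\<epsilon> * (\<Sum>J \<in> D. Oth G i p J) = \<epsilon> * Oth G i p I + \<epsilon> * (\<Sum>J \<in> D - {I}. Oth G i p J)"
      by (simp add: distrib_left)
    then show ?thesis using IH step unfolding D_def by linarith
  qed
qed

lemma ap_tendsto: assumes "\<And>I a. (\<lambda>k. f k I a) \<longlonglongrightarrow> g I a"
  shows "(\<lambda>k. actprob G (f k) h a) \<longlonglongrightarrow> actprob G g h a"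
  by (cases "who G h") (simp_all add: actprob_def assms)

lemma reach_tendsto: assumes "\<And>I a. (\<lambda>k. f k I a) \<longlonglongrightarrow> g I a"
  shows "(\<lambda>k. reach G (f k) h) \<longlonglongrightarrow> reach G g h"
  unfolding reach_def by (intro tendsto_prod ap_tendsto[OF assms])

lemma U_tendsto: assumes "\<And>I a. (\<lambda>k. f k I a) \<longlonglongrightarrow> g I a"
  shows "(\<lambda>k. U G i (f k)) \<longlonglongrightarrow> U G i g"
  unfolding U_def by (intro tendsto_sum tendsto_mult_right reach_tendsto[OF assms])

lemma Wt_tendsto: assumes "\<And>I a. (\<lambda>k. f k I a) \<longlonglongrightarrow> g I a"
  shows "(\<lambda>k. Wt G i (f k) I a) \<longlonglongrightarrow> Wt G i g I a"
  unfolding Wt_def oth_def rf_def by (intro tendsto_sum tendsto_mult_right tendsto_mult tendsto_prod ap_tendsto[OF assms])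

lemma rational_opt: assumes "efg G" "perfect_recall G" "EDT_rational G i \<rho>" "devs G i \<rho> \<tau>"
  shows "U G i \<tau> \<le> U G i \<rho>"
proof -
  obtain \<pi>s \<epsilon> where dv: "\<And>k. devs G i \<rho> (\<pi>s k)"
    and pos: "\<And>k I a. I \<in> infosets G i \<Longrightarrow> a \<in> iacts G I \<Longrightarrow> 0 < \<pi>s k I a"
    and lim: "\<And>I a. (\<lambda>k. \<pi>s k I a) \<longlonglongrightarrow> \<rho> I a"
    and ep: "\<And>k. 0 < \<epsilon> k" and el: "\<epsilon> \<longlonglongrightarrow> 0"
    and EC: "\<And>k I \<sigma>. I \<in> infosets G i \<Longrightarrow> PI G (\<pi>s k) I > 0 \<Longrightarrow> behav G I \<sigma> \<Longrightarrow>
              (U G i ((\<pi>s k)(I := \<sigma>)) - U G i (\<pi>s k)) / PI G (\<pi>s k) I \<le> \<epsilon> k"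
    using assms(3) unfolding EDT_rational_def by metis
  define C where "C = (\<Sum>J \<in> infosets G i. Oth G i \<rho> J)"
  have b: "U G i \<tau> - U G i (\<pi>s k) \<le> \<epsilon> k * C" for k
  proof -
    have Pk: "profile G (\<pi>s k)" and ok: "\<And>J. J \<notin> infosets G i \<Longrightarrow> \<pi>s k J = \<rho> J"
      using dv[of k] unfolding devs_def by blast+
    have Pt: "profile G \<tau>" and ot: "\<And>J. J \<notin> infosets G i \<Longrightarrow> \<tau> J = \<rho> J"
      using assms(4) unfolding devs_def by blast+
    have dk: "devs G i (\<pi>s k) \<tau>" unfolding devs_def using Pt ot ok by simp
    have "U G i \<tau> - U G i (\<pi>s k) \<le> \<epsilon> k * (\<Sum>J \<in> {J \<in> infosets G i. \<tau> J \<noteq> \<pi>s k J}. Oth G i (\<pi>s k) J)"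
      by (rule PD[OF assms(1,2) Pk pos less_imp_le[OF ep] EC dk])
    also have "(\<Sum>J \<in> {J \<in> infosets G i. \<tau> J \<noteq> \<pi>s k J}. Oth G i (\<pi>s k) J) \<le> (\<Sum>J \<in> infosets G i. Oth G i (\<pi>s k) J)"
      by (rule sum_mono2) (use finite_infosets[OF assms(1)] Oth_nonneg[OF assms(1) Pk] in auto)
    also have "(\<Sum>J \<in> infosets G i. Oth G i (\<pi>s k) J) = C"
      unfolding C_def Oth_def
      by (intro sum.cong refl oth_eq[OF assms(1)]) (use ok in \<open>auto simp: inI_def\<close>)
    finally show ?thesis using ep[of k] by (simp add: mult_left_mono)
  qed
  have "(\<lambda>k. U G i \<tau> - U G i (\<pi>s k)) \<longlonglongrightarrow> U G i \<tau> - U G i \<rho>"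
    by (intro tendsto_diff tendsto_const U_tendsto lim)
  moreover have "(\<lambda>k. \<epsilon> k * C) \<longlonglongrightarrow> 0 * C" by (intro tendsto_mult_right el)
  ultimately have "U G i \<tau> - U G i \<rho> \<le> 0 * C" using b by (intro LIMSEQ_le) auto
  then show ?thesis by simp
qed

lemma U_real_eq: assumes "\<forall>h \<in> nodes G. reach G \<rho> h = reach G \<pi> h" shows "U G i \<rho> = U G i \<pi>"
  unfolding U_def using assms by (intro sum.cong) (auto simp: leaves_def)

lemma EDTN_Nash: assumes "efg G" "perfect_recall G" "EDT_Nash G \<pi>" shows "Nash G \<pi>"
  unfolding Nash_def
proof (intro conjI allI impI)
  show "profile G \<pi>" using assms(3) by (simp add: EDT_Nash_def EDT_eq_def)
  fix i \<tau> assume d: "devs G i \<pi> \<tau>"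
  obtain \<rho> where r: "devs G i \<pi> \<rho>" "\<forall>h \<in> nodes G. reach G \<rho> h = reach G \<pi> h" "EDT_rational G i \<rho>"
    using assms(3) unfolding EDT_Nash_def by blast
  have "devs G i \<rho> \<tau>" using d r(1) unfolding devs_def by simp
  then have "U G i \<tau> \<le> U G i \<rho>" by (rule rational_opt[OF assms(1,2) r(3)])
  then show "U G i \<tau> \<le> U G i \<pi>" using U_real_eq[OF r(2)] by simp
qed

lemma near_max: fixes f :: "'x \<Rightarrow> real"
  assumes "S \<noteq> {}" "\<And>x. x \<in> S \<Longrightarrow> f x \<le> B" "0 < \<eta>"
  shows "\<exists>x\<in>S. \<forall>y\<in>S. f y < f x + \<eta>"
proof -
  have ne: "f ` S \<noteq> {}" using assms(1) by simp
  have bd: "bdd_above (f ` S)" using assms(2) by (intro bdd_aboveI[where M=B]) auto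
  have "Sup (f ` S) - \<eta> < Sup (f ` S)" using assms(3) by simp
  then obtain x where x: "x \<in> S" "Sup (f ` S) - \<eta> < f x" using less_cSup_iff[OF ne bd] by auto
  have "f y < f x + \<eta>" if "y \<in> S" for y
  proof -
    have "f y \<le> Sup (f ` S)" using cSup_upper[OF _ bd] that by simp
    then show ?thesis using x(2) by simp
  qed
  then show ?thesis using x(1) by blast
qed

lemma finite_subseq: fixes x :: "nat \<Rightarrow> 'b \<Rightarrow> real"
  assumes "finite P" "\<And>k p. p \<in> P \<Longrightarrow> \<bar>x k p\<bar> \<le> B"
  shows "\<exists>r L. strict_mono r \<and> (\<forall>p\<in>P. (\<lambda>k. x (r k) p) \<longlonglongrightarrow> L p)"
  using assms
proof (induction P rule: finite_induct)
  case empty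
  have "strict_mono (id :: nat \<Rightarrow> nat)" by (simp add: strict_mono_def)
  then show ?case by blast
next
  case (insert p P)
  then obtain r L where r: "strict_mono r" "\<forall>q\<in>P. (\<lambda>k. x (r k) q) \<longlonglongrightarrow> L q" by blast
  obtain f where f: "strict_mono f" "monoseq (\<lambda>n. x (r (f n)) p)"
    using seq_monosub[of "\<lambda>n. x (r n) p"] by blast
  have "Bseq (\<lambda>n. x (r (f n)) p)" using insert.prems by (intro BseqI'[where K=B]) auto
  then have "convergent (\<lambda>n. x (r (f n)) p)" using f(2) by (rule Bseq_monoseq_convergent)
  then obtain l where l: "(\<lambda>n. x (r (f n)) p) \<longlonglongrightarrow> l" by (auto simp: convergent_def)
  have sm: "strict_mono (r \<circ> f)" using strict_mono_o[OF r(1) f(1)] .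
  have "\<forall>q\<in>insert p P. (\<lambda>k. x ((r \<circ> f) k) q) \<longlonglongrightarrow> (L(p := l)) q"
  proof
    fix q assume q: "q \<in> insert p P"
    show "(\<lambda>k. x ((r \<circ> f) k) q) \<longlonglongrightarrow> (L(p := l)) q"
    proof (cases "q = p")
      case True then show ?thesis using l by simp
    next
      case False
      then have "q \<in> P" using q by simp
      then have "((\<lambda>k. x (r k) q) \<circ> f) \<longlonglongrightarrow> L q" using r(2) LIMSEQ_subseq_LIMSEQ f(1) by blast
      then show ?thesis using False by (simp add: o_def)
    qed
  qed
  then show ?case using sm by blast
qed

definition mix :: "('a, 'p, 'i) game \<Rightarrow> real \<Rightarrow> 'i \<Rightarrow> ('a \<Rightarrow> real) \<Rightarrow> 'a \<Rightarrow> real" where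
  "mix G t I \<sigma> = (\<lambda>a. if a \<in> iacts G I then (1 - real (card (iacts G I)) * t) * \<sigma> a + t else 0)"

lemma mix_behav: assumes "efg G" "behav G I \<sigma>" "0 \<le> t" "real (card (iacts G I)) * t \<le> 1"
  shows "behav G I (mix G t I \<sigma>)" "\<And>a. a \<in> iacts G I \<Longrightarrow> t \<le> mix G t I \<sigma> a"
proof -
  let ?n = "real (card (iacts G I))"
  have s1: "sum \<sigma> (iacts G I) = 1" and nn: "\<And>a. a \<in> iacts G I \<Longrightarrow> 0 \<le> \<sigma> a"
    using assms(2) by (auto simp: behav_def)
  have c: "0 \<le> 1 - ?n * t" using assms(4) by simp
  show "\<And>a. a \<in> iacts G I \<Longrightarrow> t \<le> mix G t I \<sigma> a"
    unfolding mix_def using nn c by simp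
  have "sum (mix G t I \<sigma>) (iacts G I) = (\<Sum>a \<in> iacts G I. (1 - ?n * t) * \<sigma> a + t)"
    unfolding mix_def by (rule sum.cong) auto
  also have "\<dots> = (1 - ?n * t) * sum \<sigma> (iacts G I) + ?n * t"
    by (simp add: sum.distrib sum_distrib_left)
  also have "\<dots> = 1" using s1 by simp
  finally have "sum (mix G t I \<sigma>) (iacts G I) = 1" .
  then show "behav G I (mix G t I \<sigma>)"
    unfolding behav_def using nn c assms(3) by (auto simp: mix_def)
qed

lemma U_le_Utot: assumes "efg G" "profile G \<tau>" shows "U G i \<tau> \<le> (\<Sum>z \<in> leaves G. util G i z)"
  unfolding U_def
proof (rule sum_mono)
  fix z assume z: "z \<in> leaves G"
  have "0 \<le> util G i z" using assms(1) z unfolding efg_def by blast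
  moreover have "reach G \<tau> z \<le> 1" "0 \<le> reach G \<tau> z" using reach_bounds[OF assms leaves_nodes[OF z]] by simp_all
  ultimately show "reach G \<tau> z * util G i z \<le> util G i z" by (simp add: mult_left_le_one_le)
qed

lemma Wt_bounds: assumes "efg G" "noabs G" "profile G \<tau>"
  shows "0 \<le> Wt G i \<tau> I a" "Wt G i \<tau> I a \<le> (\<Sum>z \<in> leaves G. util G i z)"
proof -
  have each: "0 \<le> oth G i \<tau> (take (kI G I z) z) * rf G \<tau> I z * util G i z \<and>
     oth G i \<tau> (take (kI G I z) z) * rf G \<tau> I z * util G i z \<le> util G i z" if z: "z \<in> leaves G" for z
  proof -
    have zn: "z \<in> nodes G" using leaves_nodes[OF z] .
    have u: "0 \<le> util G i z" using assms(1) z unfolding efg_def by blast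
    have o: "0 \<le> oth G i \<tau> (take (kI G I z) z)" "oth G i \<tau> (take (kI G I z) z) \<le> 1"
      using oth_bounds[OF assms(1,3) take_node[OF assms(1) zn]] by auto
    have r: "0 \<le> rf G \<tau> I z" "rf G \<tau> I z \<le> 1"
      unfolding rf_def using prod_take_bounds[OF assms(1,3) zn, of "{kI G I z<..<length z}"] by (auto simp: subset_iff)
    have "0 \<le> oth G i \<tau> (take (kI G I z) z) * rf G \<tau> I z" "oth G i \<tau> (take (kI G I z) z) * rf G \<tau> I z \<le> 1"
      using o r by (auto simp: mult_le_one)
    then show ?thesis using u mult_left_le_one_le[OF u] by simp
  qed
  show "0 \<le> Wt G i \<tau> I a" unfolding Wt_def using each by (intro sum_nonneg) auto
  have "Wt G i \<tau> I a \<le> (\<Sum>z \<in> {z \<in> leaves G. thr G I z \<and> z ! kI G I z = a}. util G i z)"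
    unfolding Wt_def using each by (intro sum_mono) auto
  also have "\<dots> \<le> (\<Sum>z \<in> leaves G. util G i z)"
    by (rule sum_mono2) (use finite_leaves[OF assms(1)] assms(1) in \<open>auto simp: efg_def\<close>)
  finally show "Wt G i \<tau> I a \<le> (\<Sum>z \<in> leaves G. util G i z)" .
qed

lemma realization: assumes "efg G" "profile G \<pi>" "devs G i \<pi> \<rho>"
  and R: "\<And>I. I \<in> infosets G i \<Longrightarrow> (\<exists>h\<in>inI G I. 0 < own G i \<pi> h) \<Longrightarrow> \<rho> I = \<pi> I"
  shows "\<forall>h\<in>nodes G. reach G \<rho> h = reach G \<pi> h"
proof
  fix h show "h \<in> nodes G \<Longrightarrow> reach G \<rho> h = reach G \<pi> h"
  proof (induction h rule: rev_induct)
    case Nil then show ?case by (simp add: reach_def)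
  next
    case (snoc a g)
    have gn: "g \<in> nodes G" using node_prefix[OF assms(1) snoc.prems] .
    have IH: "reach G \<rho> g = reach G \<pi> g" using snoc.IH[OF gn] .
    show ?case
    proof (cases "actprob G \<rho> g a = actprob G \<pi> g a")
      case True then show ?thesis using IH by (simp add: reach_snoc)
    next
      case False
      then obtain j where j: "who G g = Some j" by (cases "who G g") (auto simp: actprob_def)
      then have ne: "\<rho> (info G g) \<noteq> \<pi> (info G g)" using False by (auto simp: actprob_def)
      have out: "\<And>J. J \<notin> infosets G i \<Longrightarrow> \<rho> J = \<pi> J" using assms(3) unfolding devs_def by blast
      have Inf: "info G g \<in> infosets G i" using ne out by blast
      have acn: "acts G g \<noteq> {}" using snoc.prems by (auto simp: acts_def)
      have gI: "g \<in> inI G (info G g)" using gn acn j by (simp add: inI_def)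
      have "\<not> 0 < own G i \<pi> g" using R[OF Inf] ne gI by blast
      then have "own G i \<pi> g = 0" using own_bounds(1)[OF assms(1,2) gn, of i] by simp
      then have "reach G \<pi> g = 0" using reach_split[of G \<pi> g i] by simp
      then show ?thesis using IH by (simp add: reach_snoc)
    qed
  qed
qed

lemma R_nonpos: assumes "efg G" "perfect_recall G" "Nash G \<pi>" "devs G i \<pi> \<rho>"
  "\<forall>h\<in>nodes G. reach G \<rho> h = reach G \<pi> h"
  "I \<in> infosets G i" "\<exists>h\<in>inI G I. 0 < own G i \<pi> h" "0 < Oth G i \<pi> I" "a \<in> iacts G I"
  shows "Wt G i \<rho> I a - (\<Sum>b \<in> iacts G I. \<rho> I b * Wt G i \<rho> I b) \<le> 0"
proof -
  have na: "noabs G" using PR_noabs[OF assms(1,2)] .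
  have Pp: "profile G \<pi>" using assms(3) by (simp add: Nash_def)
  have Pr: "profile G \<rho>" and out: "\<And>J. J \<notin> infosets G i \<Longrightarrow> \<rho> J = \<pi> J"
    using assms(4) unfolding devs_def by blast+
  define \<delta> where "\<delta> = (\<lambda>b. if b = a then 1 else 0::real)"
  have fin: "finite (iacts G I)" using finite_iacts[OF assms(1)] .
  have bd: "behav G I \<delta>" unfolding behav_def \<delta>_def using assms(9) fin by (auto simp: sum.delta)
  have "devs G i \<pi> (\<rho>(I := \<delta>))" unfolding devs_def using profile_upd[OF Pr bd] out assms(6) by auto
  then have "U G i (\<rho>(I := \<delta>)) \<le> U G i \<pi>" using assms(3) unfolding Nash_def by blast
  also have "U G i \<pi> = U G i \<rho>" using U_real_eq[OF assms(5)] by simp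
  finally have le: "U G i (\<rho>(I := \<delta>)) - U G i \<rho> \<le> 0" by simp
  have "U G i (\<rho>(I := \<delta>)) - U G i \<rho> = (\<Sum>b \<in> iacts G I. (\<delta> b - \<rho> I b) * Bterm G i \<rho> I b)"
    by (rule U_diff[OF assms(1) na])
  also have "\<dots> = ownI G i \<rho> I * (\<Sum>b \<in> iacts G I. (\<delta> b - \<rho> I b) * Wt G i \<rho> I b)"
    unfolding sum_distrib_left by (rule sum.cong[OF refl]) (simp add: Bterm_split[OF assms(1,2,6)])
  also have "(\<Sum>b \<in> iacts G I. (\<delta> b - \<rho> I b) * Wt G i \<rho> I b) =
      (\<Sum>b \<in> iacts G I. \<delta> b * Wt G i \<rho> I b) - (\<Sum>b \<in> iacts G I. \<rho> I b * Wt G i \<rho> I b)"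
    by (simp add: sum_subtractf left_diff_distrib)
  also have "(\<Sum>b \<in> iacts G I. \<delta> b * Wt G i \<rho> I b) = Wt G i \<rho> I a"
  proof -
    have "(\<Sum>b \<in> iacts G I. \<delta> b * Wt G i \<rho> I b) = (\<Sum>b \<in> iacts G I. if b = a then Wt G i \<rho> I b else 0)"
      by (rule sum.cong) (auto simp: \<delta>_def)
    then show ?thesis using assms(9) fin by (simp add: sum.delta)
  qed
  finally have eq: "U G i (\<rho>(I := \<delta>)) - U G i \<rho> =
     ownI G i \<rho> I * (Wt G i \<rho> I a - (\<Sum>b \<in> iacts G I. \<rho> I b * Wt G i \<rho> I b))" .
  obtain h0 where h0: "h0 \<in> inI G I" "0 < own G i \<pi> h0" using assms(7) by blast
  have "\<exists>h\<in>inI G I. oth G i \<pi> h \<noteq> 0"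
  proof (rule ccontr)
    assume "\<not> ?thesis"
    then have "Oth G i \<pi> I = 0" unfolding Oth_def by simp
    then show False using assms(8) by simp
  qed
  then obtain h where h: "h \<in> inI G I" "oth G i \<pi> h \<noteq> 0" by blast
  have hn: "h \<in> nodes G" using h(1) by (simp add: inI_def)
  have "0 \<le> oth G i \<pi> h" using oth_bounds(1)[OF assms(1) Pp hn] .
  then have op: "0 < oth G i \<pi> h" using h(2) by simp
  have "own G i \<pi> h = own G i \<pi> h0" using own_inI[OF assms(1,2,6) h(1)] own_inI[OF assms(1,2,6) h0(1)] by simp
  then have "0 < reach G \<pi> h" using reach_split[of G \<pi> h i] h0(2) op by simp
  then have "0 < reach G \<rho> h" using assms(5) hn by simp
  moreover have "oth G i \<rho> h = oth G i \<pi> h" using oth_eq[OF assms(1) hn out] .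
  ultimately have "0 < own G i \<rho> h * oth G i \<pi> h" using reach_split[of G \<rho> h i] by simp
  then have "0 < own G i \<rho> h" using op by (simp add: zero_less_mult_iff)
  then have "0 < ownI G i \<rho> I" using own_inI[OF assms(1,2,6) h(1)] by simp
  then show ?thesis using le eq by (simp add: mult_le_0_iff)
qed


lemma Nash_rational: assumes "efg G" "perfect_recall G" "Nash G \<pi>"
  shows "\<exists>\<rho>. devs G i \<pi> \<rho> \<and> (\<forall>h\<in>nodes G. reach G \<rho> h = reach G \<pi> h) \<and> EDT_rational G i \<rho>"
proof -
  have na: "noabs G" using PR_noabs[OF assms(1,2)] .
  have Pp: "profile G \<pi>" using assms(3) by (simp add: Nash_def)
  define Inf where "Inf = infosets G i"
  define N0 where "N0 = 1 + (\<Sum>I\<in>Inf. card (iacts G I))"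
  define \<theta> where "\<theta> k = 1 / (real N0 * real (Suc k))" for k
  define R where "R = {I\<in>Inf. \<exists>h\<in>inI G I. 0 < own G i \<pi> h}"
  define S where "S t = {\<tau>. devs G i \<pi> \<tau> \<and> (\<forall>I\<in>Inf. \<forall>a\<in>iacts G I. t \<le> \<tau> I a) \<and> (\<forall>I\<in>R. \<tau> I = mix G t I (\<pi> I))}" for t
  define L where "L = Max (length ` nodes G)"
  define Ut where "Ut = (\<Sum>z\<in>leaves G. util G i z)"
  have finInf: "finite Inf" unfolding Inf_def using finite_infosets[OF assms(1)] .
  have RInf: "R \<subseteq> Inf" unfolding R_def by auto
  have cardlt: "real (card (iacts G I)) < real N0" if "I \<in> Inf" for I
  proof -
    have "card (iacts G I) \<le> (\<Sum>I\<in>Inf. card (iacts G I))" using finInf that by (intro member_le_sum) auto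
    then have "card (iacts G I) < N0" unfolding N0_def by simp
    then show ?thesis by simp
  qed
  have N0ge1: "1 \<le> N0" unfolding N0_def by simp
  have N0pos: "0 < real N0" using N0ge1 by simp
  have th: "0 < \<theta> k" "\<theta> k \<le> 1" "\<And>I. I \<in> Inf \<Longrightarrow> real (card (iacts G I)) * \<theta> k \<le> 1" for k
  proof -
    show "0 < \<theta> k" unfolding \<theta>_def using N0pos by simp
    have t1: "\<theta> k \<le> 1 / real N0" unfolding \<theta>_def using N0pos by (simp add: divide_simps)
    have "1 / real N0 \<le> 1" using N0ge1 by (simp add: divide_simps)
    then show "\<theta> k \<le> 1" using t1 by linarith
    fix I assume I: "I \<in> Inf"
    have "real (card (iacts G I)) * \<theta> k \<le> real (card (iacts G I)) * (1 / real N0)"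
      using t1 by (intro mult_left_mono) auto
    also have "\<dots> \<le> 1" using cardlt[OF I] N0pos by (simp add: divide_simps)
    finally show "real (card (iacts G I)) * \<theta> k \<le> 1" .
  qed
  have thlim: "\<theta> \<longlonglongrightarrow> 0"
  proof -
    have "(\<lambda>k. (1 / real N0) * inverse (real (Suc k))) \<longlonglongrightarrow> (1 / real N0) * 0"
      by (intro tendsto_mult tendsto_const LIMSEQ_inverse_real_of_nat)
    moreover have "\<theta> = (\<lambda>k. (1 / real N0) * inverse (real (Suc k)))"
      unfolding \<theta>_def by (auto simp: divide_simps)
    ultimately show ?thesis by simp
  qed
  have Sne: "S t \<noteq> {}" if t: "0 \<le> t" "\<And>I. I \<in> Inf \<Longrightarrow> real (card (iacts G I)) * t \<le> 1" for t
  proof -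
    define \<tau>0 where "\<tau>0 = (\<lambda>I. if I \<in> Inf then mix G t I (\<pi> I) else \<pi> I)"
    have "profile G \<tau>0" unfolding profile_def
    proof
      fix J assume J: "J \<in> all_infosets G"
      show "behav G J (\<tau>0 J)"
      proof (cases "J \<in> Inf")
        case True
        then show ?thesis unfolding \<tau>0_def
          using mix_behav(1)[OF assms(1) profile_behav[OF Pp] t(1) t(2)] True unfolding Inf_def by auto
      next
        case False then show ?thesis unfolding \<tau>0_def using Pp J by (simp add: profile_def)
      qed
    qed
    moreover have "\<forall>I\<in>Inf. \<forall>a\<in>iacts G I. t \<le> \<tau>0 I a"
      unfolding \<tau>0_def using mix_behav(2)[OF assms(1) profile_behav[OF Pp] t(1) t(2)] unfolding Inf_def by auto
    moreover have "\<forall>I\<in>R. \<tau>0 I = mix G t I (\<pi> I)" unfolding \<tau>0_def using RInf by auto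
    ultimately have "\<tau>0 \<in> S t" unfolding S_def devs_def \<tau>0_def Inf_def by auto
    then show ?thesis by blast
  qed
  have Sb: "U G i \<tau> \<le> Ut" if "\<tau> \<in> S t" for \<tau> t
    using that U_le_Utot[OF assms(1)] unfolding S_def devs_def Ut_def by blast
  have "\<forall>k. \<exists>x. x \<in> S (\<theta> k) \<and> (\<forall>y\<in>S (\<theta> k). U G i y < U G i x + \<theta> k ^ (L+1))"
  proof
    fix k
    have "\<exists>x\<in>S (\<theta> k). \<forall>y\<in>S (\<theta> k). U G i y < U G i x + \<theta> k ^ (L+1)"
    proof (rule near_max[OF Sne Sb])
      show "0 \<le> \<theta> k" using th(1)[of k] by simp
      show "\<And>I. I \<in> Inf \<Longrightarrow> real (card (iacts G I)) * \<theta> k \<le> 1" using th(3) by blast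
      show "0 < \<theta> k ^ (L+1)" using th(1)[of k] by simp
    qed
    then show "\<exists>x. x \<in> S (\<theta> k) \<and> (\<forall>y\<in>S (\<theta> k). U G i y < U G i x + \<theta> k ^ (L+1))" by blast
  qed
  then obtain f where f: "\<And>k. f k \<in> S (\<theta> k)" "\<And>k y. y \<in> S (\<theta> k) \<Longrightarrow> U G i y < U G i (f k) + \<theta> k ^ (L+1)"
    by metis
  have fP: "profile G (f k)" for k using f(1)[of k] unfolding S_def devs_def by blast
  have fb: "\<bar>f k I a\<bar> \<le> 1" if "I \<in> Inf" "a \<in> iacts G I" for k I a
    using behav_le1[OF assms(1) profile_behav[OF fP] that(2)] that(1) unfolding Inf_def by auto
  obtain r Lf where r: "strict_mono r" "\<forall>p\<in>Sigma Inf (iacts G). (\<lambda>k. f (r k) (fst p) (snd p)) \<longlonglongrightarrow> Lf p"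
    using finite_subseq[of "Sigma Inf (iacts G)" "\<lambda>k p. f k (fst p) (snd p)" 1] finInf finite_iacts[OF assms(1)] fb
    by (auto simp: finite_SigmaI)
  define \<rho> where "\<rho> I a = (if I \<in> Inf then (if a \<in> iacts G I then Lf (I, a) else 0) else \<pi> I a)" for I a
  define \<pi>s where "\<pi>s k = f (r k)" for k
  define \<theta>' where "\<theta>' k = \<theta> (r k)" for k
  have \<pi>sS: "\<pi>s k \<in> S (\<theta>' k)" for k unfolding \<pi>s_def \<theta>'_def by (rule f(1))
  have near: "U G i y < U G i (\<pi>s k) + \<theta>' k ^ (L+1)" if "y \<in> S (\<theta>' k)" for y k
    using f(2) that unfolding \<pi>s_def \<theta>'_def by blast
  have Pk: "profile G (\<pi>s k)" and outk: "\<And>J. J \<notin> Inf \<Longrightarrow> \<pi>s k J = \<pi> J"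
    and lowk: "\<And>I a. I \<in> Inf \<Longrightarrow> a \<in> iacts G I \<Longrightarrow> \<theta>' k \<le> \<pi>s k I a"
    and Rk: "\<And>I. I \<in> R \<Longrightarrow> \<pi>s k I = mix G (\<theta>' k) I (\<pi> I)" for k
    using \<pi>sS[of k] unfolding S_def devs_def Inf_def by blast+
  have zk: "\<pi>s k I a = 0" if "I \<in> Inf" "a \<notin> iacts G I" for k I a
    using profile_behav[OF Pk that(1)[unfolded Inf_def]] that(2) by (simp add: behav_def)
  have zp: "\<pi> I a = 0" if "I \<in> Inf" "a \<notin> iacts G I" for I a
    using profile_behav[OF Pp that(1)[unfolded Inf_def]] that(2) by (simp add: behav_def)
  have conv: "(\<lambda>k. \<pi>s k I a) \<longlonglongrightarrow> \<rho> I a" for I a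
  proof (cases "I \<in> Inf")
    case True
    show ?thesis
    proof (cases "a \<in> iacts G I")
      case True2: True
      then show ?thesis using r(2) True unfolding \<pi>s_def \<rho>_def by force
    next
      case False
      then show ?thesis using zk[OF True False] True unfolding \<rho>_def by simp
    qed
  next
    case False
    then show ?thesis using outk[OF False] unfolding \<rho>_def by simp
  qed
  have thlim': "\<theta>' \<longlonglongrightarrow> 0"
    using LIMSEQ_subseq_LIMSEQ[OF thlim r(1)] unfolding \<theta>'_def by (simp add: o_def)
  have outr: "\<And>J. J \<notin> infosets G i \<Longrightarrow> \<rho> J = \<pi> J" unfolding \<rho>_def Inf_def by auto
  have Pr: "profile G \<rho>" unfolding profile_def
  proof
    fix J assume J: "J \<in> all_infosets G"
    show "behav G J (\<rho> J)"
    proof (cases "J \<in> Inf")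
      case False then show ?thesis using Pp J outr unfolding Inf_def by (simp add: profile_def)
    next
      case True
      have nn: "0 \<le> \<rho> J a" if "a \<in> iacts G J" for a
        by (rule LIMSEQ_le_const[OF conv]) (use lowk[OF True that] th less_imp_le order_trans in \<open>unfold \<theta>'_def, blast\<close>)
      have "(\<lambda>k. \<Sum>a\<in>iacts G J. \<pi>s k J a) \<longlonglongrightarrow> (\<Sum>a\<in>iacts G J. \<rho> J a)"
        by (intro tendsto_sum conv)
      moreover have "(\<lambda>k. \<Sum>a\<in>iacts G J. \<pi>s k J a) = (\<lambda>k. 1)"
      proof
        fix k show "(\<Sum>a\<in>iacts G J. \<pi>s k J a) = 1"
          using profile_behav[OF Pk True[unfolded Inf_def]] by (simp add: behav_def)
      qed
      ultimately have "(\<lambda>k. 1::real) \<longlonglongrightarrow> (\<Sum>a\<in>iacts G J. \<rho> J a)" by simp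
      then have "(\<Sum>a\<in>iacts G J. \<rho> J a) = 1" using LIMSEQ_unique[OF _ tendsto_const] by metis
      then show ?thesis unfolding behav_def using nn True unfolding \<rho>_def by auto
    qed
  qed
  have dvr: "devs G i \<pi> \<rho>" unfolding devs_def using Pr outr by blast
  have \<rho>R: "\<rho> I = \<pi> I" if I: "I \<in> R" for I
  proof
    fix a
    show "\<rho> I a = \<pi> I a"
    proof (cases "a \<in> iacts G I")
      case True
      have "(\<lambda>k. (1 - real (card (iacts G I)) * \<theta>' k) * \<pi> I a + \<theta>' k) \<longlonglongrightarrow> (1 - real (card (iacts G I)) * 0) * \<pi> I a + 0"
        by (intro tendsto_intros thlim')
      moreover have "\<pi>s k I a = (1 - real (card (iacts G I)) * \<theta>' k) * \<pi> I a + \<theta>' k" for k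
        using Rk[OF I, of k] True by (simp add: mix_def)
      ultimately have "(\<lambda>k. \<pi>s k I a) \<longlonglongrightarrow> \<pi> I a" by simp
      then show ?thesis using conv LIMSEQ_unique by blast
    next
      case False
      then show ?thesis using zp[of I a] I RInf unfolding \<rho>_def by auto
    qed
  qed
  have real: "\<forall>h\<in>nodes G. reach G \<rho> h = reach G \<pi> h"
    by (rule realization[OF assms(1) Pp dvr]) (use \<rho>R in \<open>auto simp: R_def Inf_def\<close>)
  define O\<pi> where "O\<pi> I = Oth G i \<pi> I" for I
  define K1 where "K1 = 1 + (\<Sum>I\<in>Inf. if 0 < O\<pi> I then (real (card (iacts G I))^2 * Ut + 1) / O\<pi> I else 0)"
  define gk where "gk k I = (if 0 < O\<pi> I then (\<Sum>a\<in>iacts G I. max 0 (Wt G i (\<pi>s k) I a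
      - (\<Sum>b\<in>iacts G I. \<pi>s k I b * Wt G i (\<pi>s k) I b))) / O\<pi> I else 0)" for k I
  define \<epsilon> where "\<epsilon> k = \<theta>' k * K1 + (\<Sum>I\<in>R. gk k I)" for k
  have Ut0: "0 \<le> Ut" unfolding Ut_def using assms(1) by (intro sum_nonneg) (auto simp: efg_def)
  have K1t: "0 \<le> (if 0 < O\<pi> I then (real (card (iacts G I))^2 * Ut + 1) / O\<pi> I else 0)" for I
    using Ut0 by auto
  have K1ge: "1 \<le> K1" unfolding K1_def using K1t by (simp add: sum_nonneg)
  have K1I: "(real (card (iacts G I))^2 * Ut + 1) / O\<pi> I \<le> K1" if "I \<in> Inf" "0 < O\<pi> I" for I
  proof -
    have "(if 0 < O\<pi> I then (real (card (iacts G I))^2 * Ut + 1) / O\<pi> I else 0)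
        \<le> (\<Sum>I\<in>Inf. if 0 < O\<pi> I then (real (card (iacts G I))^2 * Ut + 1) / O\<pi> I else 0)"
      by (rule member_le_sum) (use that finInf K1t in auto)
    then show ?thesis using that unfolding K1_def by simp
  qed
  have gk0: "0 \<le> gk k I" for k I unfolding gk_def by (auto intro!: sum_nonneg divide_nonneg_pos)
  have th': "0 < \<theta>' k" "\<theta>' k \<le> 1" "\<And>I. I \<in> Inf \<Longrightarrow> real (card (iacts G I)) * \<theta>' k \<le> 1" for k
    unfolding \<theta>'_def using th by auto
  have gkle: "gk k I \<le> \<epsilon> k" if "I \<in> R" for k I
  proof -
    have "gk k I \<le> (\<Sum>I\<in>R. gk k I)"
      by (rule member_le_sum) (use that gk0 finInf RInf finite_subset in auto)
    moreover have "0 \<le> \<theta>' k * K1" using th'(1)[of k] K1ge by simp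
    ultimately show ?thesis unfolding \<epsilon>_def by linarith
  qed
  have epos: "0 < \<epsilon> k" for k
  proof -
    have "0 < \<theta>' k * K1" using th'(1)[of k] K1ge by simp
    moreover have "0 \<le> (\<Sum>I\<in>R. gk k I)" using gk0 by (simp add: sum_nonneg)
    ultimately show ?thesis unfolding \<epsilon>_def by linarith
  qed
  have Oeq: "Oth G i (\<pi>s k) I = O\<pi> I" for k I
    unfolding O\<pi>_def Oth_def
    by (intro sum.cong refl oth_eq[OF assms(1)]) (use outk in \<open>auto simp: inI_def Inf_def\<close>)
  have glim: "(\<lambda>k. gk k I) \<longlonglongrightarrow> 0" if I: "I \<in> R" for I
  proof (cases "0 < O\<pi> I")
    case False then show ?thesis unfolding gk_def by simp
  next
    case True
    have "(\<lambda>k. (\<Sum>a\<in>iacts G I. max 0 (Wt G i (\<pi>s k) I a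
      - (\<Sum>b\<in>iacts G I. \<pi>s k I b * Wt G i (\<pi>s k) I b))) / O\<pi> I) \<longlonglongrightarrow>
       (\<Sum>a\<in>iacts G I. max 0 (Wt G i \<rho> I a - (\<Sum>b\<in>iacts G I. \<rho> I b * Wt G i \<rho> I b))) / O\<pi> I"
      by (intro tendsto_divide tendsto_const tendsto_sum tendsto_max tendsto_diff tendsto_mult
          Wt_tendsto conv) (use True in simp)
    moreover have "(\<Sum>a\<in>iacts G I. max 0 (Wt G i \<rho> I a - (\<Sum>b\<in>iacts G I. \<rho> I b * Wt G i \<rho> I b))) = 0"
    proof (rule sum.neutral, rule ballI)
      fix a assume a: "a \<in> iacts G I"
      have "Wt G i \<rho> I a - (\<Sum>b\<in>iacts G I. \<rho> I b * Wt G i \<rho> I b) \<le> 0"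
        by (rule R_nonpos[OF assms dvr real]) (use I a True in \<open>auto simp: R_def Inf_def O\<pi>_def\<close>)
      then show "max 0 (Wt G i \<rho> I a - (\<Sum>b\<in>iacts G I. \<rho> I b * Wt G i \<rho> I b)) = 0" by simp
    qed
    ultimately show ?thesis unfolding gk_def using True by simp
  qed
  have elim: "\<epsilon> \<longlonglongrightarrow> 0"
  proof -
    have "(\<lambda>k. \<theta>' k * K1 + (\<Sum>I\<in>R. gk k I)) \<longlonglongrightarrow> 0 * K1 + (\<Sum>I\<in>R. 0)"
      by (intro tendsto_add tendsto_mult tendsto_const thlim' tendsto_sum glim) auto
    then show ?thesis unfolding \<epsilon>_def by simp
  qed
  have posk: "0 < \<pi>s k I a" if "I \<in> infosets G i" "a \<in> iacts G I" for k I a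
    using lowk[of I a k] th'(1)[of k] that unfolding Inf_def by linarith
  have EC: "(U G i ((\<pi>s k)(I := \<sigma>)) - U G i (\<pi>s k)) / PI G (\<pi>s k) I \<le> \<epsilon> k"
    if I: "I \<in> infosets G i" and PIp: "PI G (\<pi>s k) I > 0" and b: "behav G I \<sigma>" for k I \<sigma>
  proof -
    let ?\<tau> = "\<pi>s k"
    let ?t = "\<theta>' k"
    let ?n = "real (card (iacts G I))"
    have IInf: "I \<in> Inf" using I unfolding Inf_def .
    have PIeq: "PI G ?\<tau> I = ownI G i ?\<tau> I * O\<pi> I"
      using PI_Fr[OF assms(1) na] Fr_split[OF assms(1,2) I] Oeq by simp
    have opos: "0 < ownI G i ?\<tau> I"
      by (rule ownI_pos[OF assms(1) I posk])
    have Opos: "0 < O\<pi> I" using PIp opos unfolding PIeq by (simp add: zero_less_mult_iff)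
    have fin: "finite (iacts G I)" using finite_iacts[OF assms(1)] .
    have s1: "sum \<sigma> (iacts G I) = 1" and snn: "\<And>a. a \<in> iacts G I \<Longrightarrow> 0 \<le> \<sigma> a"
      and sle: "\<And>a. a \<in> iacts G I \<Longrightarrow> \<sigma> a \<le> 1"
      using b behav_le1[OF assms(1) b] by (auto simp: behav_def)
    have d1: "U G i (?\<tau>(I := \<sigma>)) - U G i ?\<tau> = (\<Sum>a \<in> iacts G I. (\<sigma> a - ?\<tau> I a) * Bterm G i ?\<tau> I a)"
      by (rule U_diff[OF assms(1) na])
    have main: "U G i (?\<tau>(I := \<sigma>)) - U G i ?\<tau> \<le> \<epsilon> k * PI G ?\<tau> I"
    proof (cases "I \<in> R")
      case True
      define c where "c = (\<Sum>b\<in>iacts G I. ?\<tau> I b * Wt G i ?\<tau> I b)"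
      have eqY: "U G i (?\<tau>(I := \<sigma>)) - U G i ?\<tau> = ownI G i ?\<tau> I * (\<Sum>a \<in> iacts G I. (\<sigma> a - ?\<tau> I a) * Wt G i ?\<tau> I a)"
        unfolding d1 sum_distrib_left by (rule sum.cong[OF refl]) (simp add: Bterm_split[OF assms(1,2) I])
      have "(\<Sum>a \<in> iacts G I. (\<sigma> a - ?\<tau> I a) * Wt G i ?\<tau> I a) = (\<Sum>a \<in> iacts G I. \<sigma> a * (Wt G i ?\<tau> I a - c))"
      proof -
        have "(\<Sum>a \<in> iacts G I. (\<sigma> a - ?\<tau> I a) * Wt G i ?\<tau> I a) = (\<Sum>a \<in> iacts G I. \<sigma> a * Wt G i ?\<tau> I a) - c"
          unfolding c_def by (simp add: sum_subtractf left_diff_distrib)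
        also have "c = (\<Sum>a \<in> iacts G I. \<sigma> a * c)" using s1 by (simp add: sum_distrib_right[symmetric])
        finally show ?thesis by (simp add: sum_subtractf right_diff_distrib)
      qed
      also have "(\<Sum>a \<in> iacts G I. \<sigma> a * (Wt G i ?\<tau> I a - c)) \<le> (\<Sum>a \<in> iacts G I. max 0 (Wt G i ?\<tau> I a - c))"
      proof (rule sum_mono)
        fix a assume a: "a \<in> iacts G I"
        have "\<sigma> a * (Wt G i ?\<tau> I a - c) \<le> \<sigma> a * max 0 (Wt G i ?\<tau> I a - c)"
          using snn[OF a] by (intro mult_left_mono) auto
        also have "\<dots> \<le> max 0 (Wt G i ?\<tau> I a - c)"
          using sle[OF a] snn[OF a] by (intro mult_left_le_one_le) auto
        finally show "\<sigma> a * (Wt G i ?\<tau> I a - c) \<le> max 0 (Wt G i ?\<tau> I a - c)" .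
      qed
      also have "(\<Sum>a \<in> iacts G I. max 0 (Wt G i ?\<tau> I a - c)) = O\<pi> I * gk k I"
        unfolding gk_def c_def using Opos by simp
      finally have "(\<Sum>a \<in> iacts G I. (\<sigma> a - ?\<tau> I a) * Wt G i ?\<tau> I a) \<le> O\<pi> I * gk k I" .
      then have "ownI G i ?\<tau> I * (\<Sum>a \<in> iacts G I. (\<sigma> a - ?\<tau> I a) * Wt G i ?\<tau> I a) \<le> ownI G i ?\<tau> I * (O\<pi> I * gk k I)"
        using opos by (intro mult_left_mono) auto
      then have "U G i (?\<tau>(I := \<sigma>)) - U G i ?\<tau> \<le> ownI G i ?\<tau> I * (O\<pi> I * gk k I)"
        unfolding eqY .
      also have "\<dots> \<le> ownI G i ?\<tau> I * (O\<pi> I * \<epsilon> k)"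
        using gkle[OF True, of k] opos Opos by (intro mult_left_mono) auto
      finally show ?thesis unfolding PIeq by (simp add: algebra_simps)
    next
      case False
      define \<sigma>' where "\<sigma>' = mix G ?t I \<sigma>"
      have mb: "behav G I \<sigma>'" "\<And>a. a \<in> iacts G I \<Longrightarrow> ?t \<le> \<sigma>' a"
        using mix_behav[OF assms(1) b less_imp_le[OF th'(1)] th'(3)[OF IInf]] unfolding \<sigma>'_def by auto
      have inS: "?\<tau>(I := \<sigma>') \<in> S ?t"
        unfolding S_def devs_def
      proof (intro CollectI conjI ballI allI impI)
        show "profile G (?\<tau>(I := \<sigma>'))" using profile_upd[OF Pk mb(1)] .
        fix J assume "J \<notin> infosets G i"
        then show "(?\<tau>(I := \<sigma>')) J = \<pi> J" using outk[of J k] I unfolding Inf_def by auto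
      next
        fix J a assume "J \<in> Inf" "a \<in> iacts G J"
        then show "?t \<le> (?\<tau>(I := \<sigma>')) J a" using lowk mb(2) by (cases "J = I") auto
      next
        fix J assume "J \<in> R"
        then show "(?\<tau>(I := \<sigma>')) J = mix G ?t J (\<pi> J)" using Rk False by (cases "J = I") auto
      qed
      have nm: "U G i (?\<tau>(I := \<sigma>')) < U G i ?\<tau> + ?t ^ (L+1)" using near[OF inS] .
      have d2: "U G i (?\<tau>(I := \<sigma>')) - U G i ?\<tau> = (\<Sum>a \<in> iacts G I. (\<sigma>' a - ?\<tau> I a) * Bterm G i ?\<tau> I a)"
        by (rule U_diff[OF assms(1) na])
      have "U G i (?\<tau>(I := \<sigma>)) - U G i (?\<tau>(I := \<sigma>')) = (\<Sum>a \<in> iacts G I. (\<sigma> a - \<sigma>' a) * Bterm G i ?\<tau> I a)"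
      proof -
        have "(\<Sum>a \<in> iacts G I. (\<sigma> a - \<sigma>' a) * Bterm G i ?\<tau> I a) =
           (\<Sum>a \<in> iacts G I. (\<sigma> a - ?\<tau> I a) * Bterm G i ?\<tau> I a) - (\<Sum>a \<in> iacts G I. (\<sigma>' a - ?\<tau> I a) * Bterm G i ?\<tau> I a)"
          unfolding sum_subtractf[symmetric] by (rule sum.cong) (auto simp: algebra_simps)
        then show ?thesis using d1 d2 by linarith
      qed
      also have "\<dots> \<le> (\<Sum>a \<in> iacts G I. ?n * ?t * Bterm G i ?\<tau> I a)"
      proof (rule sum_mono)
        fix a assume a: "a \<in> iacts G I"
        have "\<sigma> a - \<sigma>' a = ?n * ?t * \<sigma> a - ?t" unfolding \<sigma>'_def mix_def using a by (simp add: algebra_simps)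
        also have "\<dots> \<le> ?n * ?t"
        proof -
          have "?n * ?t * \<sigma> a \<le> ?n * ?t" using sle[OF a] th'(1)[of k] by (intro mult_left_le) auto
          then show ?thesis using th'(1)[of k] by linarith
        qed
        finally have "\<sigma> a - \<sigma>' a \<le> ?n * ?t" .
        then show "(\<sigma> a - \<sigma>' a) * Bterm G i ?\<tau> I a \<le> ?n * ?t * Bterm G i ?\<tau> I a"
          using Bterm_nonneg[OF assms(1) na Pk] by (intro mult_right_mono) auto
      qed
      also have "\<dots> = ?n * ?t * ownI G i ?\<tau> I * (\<Sum>a \<in> iacts G I. Wt G i ?\<tau> I a)"
        by (simp add: Bterm_split[OF assms(1,2) I] sum_distrib_left mult.assoc)
      also have "\<dots> \<le> ?n * ?t * ownI G i ?\<tau> I * (?n * Ut)"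
      proof -
        have "(\<Sum>a \<in> iacts G I. Wt G i ?\<tau> I a) \<le> (\<Sum>a \<in> iacts G I. Ut)"
          using Wt_bounds(2)[OF assms(1) na Pk] unfolding Ut_def by (intro sum_mono) auto
        then have "(\<Sum>a \<in> iacts G I. Wt G i ?\<tau> I a) \<le> ?n * Ut" by simp
        moreover have "0 \<le> ?n * ?t * ownI G i ?\<tau> I" using th'(1)[of k] opos by simp
        ultimately show ?thesis by (intro mult_left_mono)
      qed
      finally have e1: "U G i (?\<tau>(I := \<sigma>)) - U G i ?\<tau> < ?n * ?t * ownI G i ?\<tau> I * (?n * Ut) + ?t ^ (L+1)"
        using nm by linarith
      obtain h where h: "h \<in> pnodes G i" "info G h = I" using I by (auto simp: infosets_def)
      then have hI: "h \<in> inI G I" using pnodes_inI[of h G i] by blast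
      have sn: "(SOME h. h \<in> inI G I) \<in> nodes G" using SOME_inI_nodes[OF hI] .
      have lb: "?t ^ card {j. j < length (SOME h. h \<in> inI G I) \<and> who G (take j (SOME h. h \<in> inI G I)) = Some i}
          \<le> ownI G i ?\<tau> I"
        unfolding ownI_def by (rule own_lower[OF assms(1) sn less_imp_le[OF th'(1)]]) (use lowk Inf_def in blast)
      have "card {j. j < length (SOME h. h \<in> inI G I) \<and> who G (take j (SOME h. h \<in> inI G I)) = Some i}
          \<le> card {..<length (SOME h. h \<in> inI G I)}" by (intro card_mono) auto
      also have "\<dots> \<le> L" unfolding L_def using sn by (simp add: Max_ge efg_fin[OF assms(1)])
      finally have "?t ^ L \<le> ?t ^ card {j. j < length (SOME h. h \<in> inI G I) \<and> who G (take j (SOME h. h \<in> inI G I)) = Some i}"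
        using th'(1,2)[of k] by (intro power_decreasing) auto
      with lb have tl: "?t ^ L \<le> ownI G i ?\<tau> I" by linarith
      have "?t ^ (L+1) = ?t * ?t ^ L" by simp
      also have "\<dots> \<le> ?t * ownI G i ?\<tau> I" using tl th'(1)[of k] by (intro mult_left_mono) auto
      finally have e2: "?t ^ (L+1) \<le> ?t * ownI G i ?\<tau> I" .
      have "U G i (?\<tau>(I := \<sigma>)) - U G i ?\<tau> \<le> ?t * ownI G i ?\<tau> I * (?n^2 * Ut + 1)"
        using e1 e2 by (simp add: power2_eq_square algebra_simps)
      also have "?n^2 * Ut + 1 = O\<pi> I * ((?n^2 * Ut + 1) / O\<pi> I)" using Opos by simp
      also have "(?n^2 * Ut + 1) / O\<pi> I \<le> K1" using K1I[OF IInf Opos] .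
      then have "?t * ownI G i ?\<tau> I * (O\<pi> I * ((?n^2 * Ut + 1) / O\<pi> I)) \<le> ?t * ownI G i ?\<tau> I * (O\<pi> I * K1)"
        using th'(1)[of k] opos Opos by (intro mult_left_mono) auto
      also have "?t * ownI G i ?\<tau> I * (O\<pi> I * K1) = (?t * K1) * PI G ?\<tau> I" unfolding PIeq by simp
      also have "\<dots> \<le> \<epsilon> k * PI G ?\<tau> I"
      proof -
        have "?t * K1 \<le> \<epsilon> k" unfolding \<epsilon>_def using gk0 by (simp add: sum_nonneg)
        then show ?thesis using PIp by (intro mult_right_mono) auto
      qed
      finally show ?thesis .
    qed
    then show ?thesis using PIp by (simp add: pos_divide_le_eq)
  qed
  have "EDT_rational G i \<rho>" unfolding EDT_rational_def
  proof (intro exI conjI allI ballI impI)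
    fix k show "devs G i \<rho> (\<pi>s k)" unfolding devs_def using Pk outk outr unfolding Inf_def by simp
  next
    fix k I a assume "I \<in> infosets G i" "a \<in> iacts G I"
    then show "0 < \<pi>s k I a" by (rule posk)
  next
    fix I a show "(\<lambda>k. \<pi>s k I a) \<longlonglongrightarrow> \<rho> I a" by (rule conv)
  next
    fix k show "0 < \<epsilon> k" by (rule epos)
  next
    show "\<epsilon> \<longlonglongrightarrow> 0" by (rule elim)
  next
    fix k I \<sigma> assume "I \<in> infosets G i" "PI G (\<pi>s k) I > 0" "behav G I \<sigma>"
    then show "(U G i ((\<pi>s k)(I := \<sigma>)) - U G i (\<pi>s k)) / PI G (\<pi>s k) I \<le> \<epsilon> k" by (rule EC)
  qed
  then show ?thesis using dvr real by blast
qed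

lemma Nash_EDT_eq: assumes "Nash G \<pi>" shows "EDT_eq G \<pi>"
  unfolding EDT_eq_def
proof (intro conjI allI ballI impI)
  show P: "profile G \<pi>" using assms by (simp add: Nash_def)
  fix i I \<sigma> assume I: "I \<in> infosets G i" and b: "behav G I \<sigma>"
  have "devs G i \<pi> (\<pi>(I := \<sigma>))" unfolding devs_def using profile_upd[OF P b] I by auto
  then show "U G i (\<pi>(I := \<sigma>)) \<le> U G i \<pi>" using assms unfolding Nash_def by blast
qed

theorem proposition4:
  fixes G :: "('a, 'p, 'i) game"
  assumes "efg G"
  shows "(\<forall>\<pi>. EDT_Nash G \<pi> \<longrightarrow> EDT_eq G \<pi>)
       \<and> (\<not> absentminded G \<longrightarrow> (\<forall>\<pi>. EDT_Nash G \<pi> \<longleftrightarrow> CDT_Nash G \<pi>))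
       \<and> (perfect_recall G \<longrightarrow> (\<forall>\<pi>. EDT_Nash G \<pi> \<longleftrightarrow> Nash G \<pi>))"
proof (intro conjI impI allI)
  fix \<pi> assume "EDT_Nash G \<pi>" then show "EDT_eq G \<pi>" by (simp add: EDT_Nash_def)
next
  fix \<pi> assume "\<not> absentminded G"
  then show "EDT_Nash G \<pi> \<longleftrightarrow> CDT_Nash G \<pi>" using EDT_CDT_Nash[OF assms noabs_if] by blast
next
  fix \<pi> assume pr: "perfect_recall G"
  show "EDT_Nash G \<pi> \<longleftrightarrow> Nash G \<pi>"
  proof
    assume "EDT_Nash G \<pi>" then show "Nash G \<pi>" by (rule EDTN_Nash[OF assms pr])
  next
    assume N: "Nash G \<pi>"
    show "EDT_Nash G \<pi>" unfolding EDT_Nash_def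
      using Nash_EDT_eq[OF N] Nash_rational[OF assms pr N] by blast
  qed
qed

end
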